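(* Consider the Johnson scheme $\mathrm J(N,D)$ with $D\le\lfloor N/2\rfloor$ and $D\ge 1$, fix $x\in X$, let $Y\subseteq X$ with $1<|Y|<|X|$, $\chi=\chi_Y$, $\delta_x=\delta_x(\chi)$, $\delta^*=\delta^*(\chi)$. Suppose $t\in\{1,\dots,D\}$ is such that for every $1\le r\le t$ at least one of $$|\{r\le j\le D-r:E_j\chi\ne0\}|\le\delta_x-r,\qquad |\{r\le i\le D-r:E_i^*(x)\chi\ne0\}|\le\delta^*-r$$ holds. Then for every $0\le k\le D$, the multiset $\{x\cap y: y\in Y,\ |x\cap y|=D-k\}$ (counted with repetition), viewed as a family of $(D-k)$-subsets of the $D$-set $x$, forms a $t$-design (i.e. every $t$-subset of $x$ is contained in the same number of its members).
   Context: The Johnson scheme $\mathrm J(N,D)$ has vertex set $X$ the $D$-subsets of $\{1,\dots,N\}$ and relations $R_i=\{(u,v):|u\cap v|=D-i\}$, with associate matrices $A_i$ and primitive idempotents $E_0=|X|^{-1}J,E_1,\dots,E_D$ in the standard cometric (Q-polynomial) ordering. $V=\mathbb C^X$, $\chi_Y=\sum_{y\in Y}\hat y$. $E_i^*(x)$ is the diagonal matrix with $(E_i^*(x))_{yy}=1$ if $(x,y)\in R_i$ and $0$ otherwise. $\delta_x(\chi)=\min\{i\ne0:E_i^*(x)\chi\ne0\}$, $\delta^*(\chi)=\min\{j\ne0:E_j\chi\ne0\}$. *)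

theory Defs
  imports Complex_Main "HOL-Library.Multiset"
begin

text \<open>Johnson scheme J(N,D): vertices are the D-subsets of {1..N}.
  Vectors in V = C^X are represented as functions on nat sets (only the
  values on X matter; all operators below return 0 outside X).\<close>

definition johnson_X :: "nat \<Rightarrow> nat \<Rightarrow> nat set set" where
  "johnson_X N D = {u. u \<subseteq> {1..N} \<and> card u = D}"

definition char_vec :: "nat set set \<Rightarrow> nat set \<Rightarrow> complex" where
  "char_vec Y = (\<lambda>u. if u \<in> Y then 1 else 0)"

definition johnson_A1 :: "nat \<Rightarrow> nat \<Rightarrow> (nat set \<Rightarrow> complex) \<Rightarrow> nat set \<Rightarrow> complex" where
  "johnson_A1 N D v = (\<lambda>u. if u \<in> johnson_X N D
      then (\<Sum>w\<in>johnson_X N D. if card (u \<inter> w) = D - 1 then v w else 0) else 0)"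

text \<open>Eigenvalue of A_1 on the j-th eigenspace in the standard (Q-polynomial) ordering.\<close>
definition johnson_theta :: "nat \<Rightarrow> nat \<Rightarrow> nat \<Rightarrow> real" where
  "johnson_theta N D j = (real D - real j) * (real N - real D - real j) - real j"

fun johnson_Eprod :: "nat \<Rightarrow> nat \<Rightarrow> nat \<Rightarrow> nat list \<Rightarrow> (nat set \<Rightarrow> complex) \<Rightarrow> nat set \<Rightarrow> complex" where
  "johnson_Eprod N D j [] v = (\<lambda>u. if u \<in> johnson_X N D then v u else 0)"
| "johnson_Eprod N D j (l # ls) v =
     (if l = j then johnson_Eprod N D j ls v
      else (let w = johnson_Eprod N D j ls v in
             (\<lambda>u. (johnson_A1 N D w u - of_real (johnson_theta N D l) * w u)
                   / of_real (johnson_theta N D j - johnson_theta N D l))))"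

text \<open>Primitive idempotent E_j (j = 0..D): the spectral projection of A_1 onto
  its theta_j-eigenspace (A_1 generates the Bose-Mesner algebra).\<close>
definition johnson_E :: "nat \<Rightarrow> nat \<Rightarrow> nat \<Rightarrow> (nat set \<Rightarrow> complex) \<Rightarrow> nat set \<Rightarrow> complex" where
  "johnson_E N D j v = johnson_Eprod N D j [0..<Suc D] v"

definition johnson_Estar :: "nat \<Rightarrow> nat \<Rightarrow> nat set \<Rightarrow> nat \<Rightarrow> (nat set \<Rightarrow> complex) \<Rightarrow> nat set \<Rightarrow> complex" where
  "johnson_Estar N D x i v = (\<lambda>u. if u \<in> johnson_X N D \<and> card (x \<inter> u) = D - i then v u else 0)"

definition delta_x :: "nat \<Rightarrow> nat \<Rightarrow> nat set \<Rightarrow> (nat set \<Rightarrow> complex) \<Rightarrow> nat" where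
  "delta_x N D x chi = (LEAST i. i \<noteq> 0 \<and> i \<le> D \<and> johnson_Estar N D x i chi \<noteq> (\<lambda>_. 0))"

definition delta_star :: "nat \<Rightarrow> nat \<Rightarrow> (nat set \<Rightarrow> complex) \<Rightarrow> nat" where
  "delta_star N D chi = (LEAST j. j \<noteq> 0 \<and> j \<le> D \<and> johnson_E N D j chi \<noteq> (\<lambda>_. 0))"

definition is_t_design :: "nat \<Rightarrow> nat set \<Rightarrow> nat set multiset \<Rightarrow> bool" where
  "is_t_design t P B = (\<exists>lam. \<forall>T. T \<subseteq> P \<and> card T = t \<longrightarrow>
        size (filter_mset (\<lambda>b. T \<subseteq> b) B) = lam)"

end

theory Submission
  imports Defs
begin

locale jsetup =
  fixes N D :: nat and x :: "nat set"
  assumes D1: "1 \<le> D" and DN: "2*D \<le> N" and xX: "x \<in> johnson_X N D"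
begin

abbreviation "X \<equiv> johnson_X N D"
abbreviation "A \<equiv> johnson_A1 N D"

lemma X_iff: "y \<in> X \<longleftrightarrow> y \<subseteq> {1..N} \<and> card y = D"
  by (simp add: johnson_X_def)

lemma finX: "finite X"
proof -
  have "X \<subseteq> Pow {1..N}" by (auto simp: johnson_X_def)
  thus ?thesis by (rule finite_subset) simp
qed

lemma X_fin: "y \<in> X \<Longrightarrow> finite y"
  using X_iff finite_subset by blast

lemma x_sub: "x \<subseteq> {1..N}" and x_card: "card x = D" and x_fin: "finite x"
  using xX X_iff X_fin by auto

lemma nb_bij:
  assumes y: "y \<in> X"
  shows "bij_betw (\<lambda>(a,b). insert b (y - {a})) (y \<times> ({1..N} - y)) {w \<in> X. card (y \<inter> w) = D - 1}"
proof -
  have fy: "finite y" and yN: "y \<subseteq> {1..N}" and cy: "card y = D" using y X_iff X_fin by auto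
  show ?thesis
  proof (rule bij_betwI')
    fix p q assume p: "p \<in> y \<times> ({1..N} - y)" and q: "q \<in> y \<times> ({1..N} - y)"
    obtain a b where pab: "p = (a,b)" by (cases p)
    obtain a' b' where qab: "q = (a',b')" by (cases q)
    show "((case p of (a, b) \<Rightarrow> insert b (y - {a})) = (case q of (a, b) \<Rightarrow> insert b (y - {a}))) = (p = q)"
    proof
      assume eq: "(case p of (a, b) \<Rightarrow> insert b (y - {a})) = (case q of (a, b) \<Rightarrow> insert b (y - {a}))"
      hence e: "insert b (y - {a}) = insert b' (y - {a'})" using pab qab by simp
      have "b \<notin> y" "b' \<notin> y" "a \<in> y" "a' \<in> y" using p q pab qab by auto
      have bb: "b = b'" using e \<open>b \<notin> y\<close> by (metis Diff_iff insertE insertI1)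
      have "a = a'"
      proof (rule ccontr)
        assume "a \<noteq> a'"
        hence "a \<in> insert b' (y - {a'})" using \<open>a \<in> y\<close> by auto
        hence "a \<in> insert b (y - {a})" using e by simp
        thus False using \<open>a \<in> y\<close> \<open>b \<notin> y\<close> by auto
      qed
      thus "p = q" using bb pab qab by simp
    qed simp
  next
    fix p assume p: "p \<in> y \<times> ({1..N} - y)"
    obtain a b where pab: "p = (a,b)" by (cases p)
    have a: "a \<in> y" and b: "b \<in> {1..N}" "b \<notin> y" using p pab by auto
    have c1: "card (y - {a}) = D - 1" using a fy cy by simp
    have "card (insert b (y - {a})) = D" using c1 b fy D1 by simp
    moreover have "insert b (y - {a}) \<subseteq> {1..N}" using yN b by auto
    moreover have "y \<inter> insert b (y - {a}) = y - {a}" using b by auto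
    ultimately show "(case p of (a, b) \<Rightarrow> insert b (y - {a})) \<in> {w \<in> X. card (y \<inter> w) = D - 1}"
      using pab c1 by (simp add: X_iff)
  next
    fix w assume w: "w \<in> {w \<in> X. card (y \<inter> w) = D - 1}"
    have fw: "finite w" and wN: "w \<subseteq> {1..N}" and cw: "card w = D" and ci: "card (y \<inter> w) = D - 1"
      using w X_iff X_fin by auto
    have "card (y - w) = 1" using card_Diff_subset_Int[of y w] fy cy ci D1
      by (simp add: Int_commute card_Diff_subset_Int)
    then obtain a where ya: "y - w = {a}" using card_1_singletonE by blast
    have "card (w - y) = 1" using card_Diff_subset_Int[of w y] fw cw ci D1
      by (simp add: Int_commute)
    then obtain b where wb: "w - y = {b}" using card_1_singletonE by blast
    have weq: "w = insert b (y - {a})" using ya wb by blast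
    have "a \<in> y" "b \<in> {1..N} - y" using ya wb wN by auto
    thus "\<exists>p\<in>y \<times> ({1..N} - y). w = (case p of (a, b) \<Rightarrow> insert b (y - {a}))"
      using weq by (intro bexI[of _ "(a,b)"]) auto
  qed
qed

lemma A_nb:
  assumes y: "y \<in> X"
  shows "A v y = (\<Sum>a\<in>y. \<Sum>b\<in>{1..N} - y. v (insert b (y - {a})))"
proof -
  have fy: "finite y" using y X_fin by auto
  have "A v y = (\<Sum>w\<in>X. if card (y \<inter> w) = D - 1 then v w else 0)"
    using y by (simp add: johnson_A1_def)
  also have "\<dots> = (\<Sum>w\<in>{w \<in> X. card (y \<inter> w) = D - 1}. v w)"
    using finX by (simp add: sum.inter_filter)
  also have "\<dots> = (\<Sum>p\<in>y \<times> ({1..N} - y). v (case p of (a,b) \<Rightarrow> insert b (y - {a})))"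
    using sum.reindex_bij_betw[OF nb_bij[OF y], of v] by simp
  also have "\<dots> = (\<Sum>a\<in>y. \<Sum>b\<in>{1..N} - y. v (insert b (y - {a})))"
    by (simp add: sum.cartesian_product case_prod_unfold)
  finally show ?thesis .
qed

end

lemma remove1_distinct_filter: "distinct xs \<Longrightarrow> remove1 a xs = filter (\<lambda>l. l \<noteq> a) xs"
  by (induction xs) (auto intro!: filter_True[symmetric])

context jsetup
begin

definition onX :: "(nat set \<Rightarrow> complex) \<Rightarrow> bool" where
  "onX u \<longleftrightarrow> (\<forall>y. y \<notin> X \<longrightarrow> u y = 0)"

definition ip :: "(nat set \<Rightarrow> complex) \<Rightarrow> (nat set \<Rightarrow> complex) \<Rightarrow> complex" where
  "ip u v = (\<Sum>y\<in>X. u y * cnj (v y))"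

definition th :: "nat \<Rightarrow> complex" where
  "th j = of_real (johnson_theta N D j)"

definition op :: "nat \<Rightarrow> (nat set \<Rightarrow> complex) \<Rightarrow> nat set \<Rightarrow> complex" where
  "op l u = (\<lambda>y. A u y - th l * u y)"

definition rX :: "(nat set \<Rightarrow> complex) \<Rightarrow> nat set \<Rightarrow> complex" where
  "rX u = (\<lambda>y. if y \<in> X then u y else 0)"

fun pr :: "nat list \<Rightarrow> (nat set \<Rightarrow> complex) \<Rightarrow> nat set \<Rightarrow> complex" where
  "pr [] u = rX u"
| "pr (l # L) u = op l (pr L u)"

lemma cnj_th[simp]: "cnj (th j) = th j"
  by (simp add: th_def)

lemma A_onX[simp]: "onX (A u)"
  by (simp add: onX_def johnson_A1_def)

lemma A_out: "y \<notin> X \<Longrightarrow> A u y = 0"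
  by (simp add: johnson_A1_def)

lemma onX_rX[simp]: "onX u \<Longrightarrow> rX u = u"
  by (auto simp: onX_def rX_def)

lemma rX_onX[simp]: "onX (rX u)"
  by (simp add: onX_def rX_def)

lemma A_rX[simp]: "A (rX u) = A u"
  by (auto simp add: johnson_A1_def rX_def fun_eq_iff intro!: sum.cong)

lemma A_add: "A (\<lambda>y. u y + v y) = (\<lambda>y. A u y + A v y)"
  by (auto simp add: johnson_A1_def fun_eq_iff sum.distrib[symmetric] intro!: sum.cong)

lemma A_scale: "A (\<lambda>y. c * u y) = (\<lambda>y. c * A u y)"
  by (auto simp add: johnson_A1_def fun_eq_iff sum_distrib_left intro!: sum.cong)

lemma A_diff: "A (\<lambda>y. u y - v y) = (\<lambda>y. A u y - A v y)"
  by (auto simp add: johnson_A1_def fun_eq_iff sum_subtractf[symmetric] intro!: sum.cong)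

lemma A_zero: "A (\<lambda>y. 0) = (\<lambda>y. 0)"
  by (simp add: johnson_A1_def fun_eq_iff)

lemma if_sum: "(if c then sum f I else 0) = sum (\<lambda>i. if c then f i else 0) I"
  by simp

lemma A_sum: "A (\<lambda>y. \<Sum>i\<in>I. f i y) = (\<lambda>y. \<Sum>i\<in>I. A (f i) y)"
proof (rule ext)
  fix y
  show "A (\<lambda>y. \<Sum>i\<in>I. f i y) y = (\<Sum>i\<in>I. A (f i) y)"
  proof (cases "y \<in> X")
    case True
    have "A (\<lambda>y. \<Sum>i\<in>I. f i y) y = (\<Sum>w\<in>X. \<Sum>i\<in>I. if card (y \<inter> w) = D - 1 then f i w else 0)"
      using True by (simp add: johnson_A1_def if_sum del: sum.neutral_const)
    also have "\<dots> = (\<Sum>i\<in>I. \<Sum>w\<in>X. if card (y \<inter> w) = D - 1 then f i w else 0)"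
      by (rule sum.swap)
    also have "\<dots> = (\<Sum>i\<in>I. A (f i) y)"
      using True by (auto simp add: johnson_A1_def intro!: sum.cong)
    finally show ?thesis .
  qed (simp add: johnson_A1_def)
qed

lemma op_onX[simp]: "onX u \<Longrightarrow> onX (op l u)"
  by (simp add: onX_def op_def A_out)

lemma pr_onX[simp]: "onX (pr L u)"
  by (induction L) auto

lemma op_add: "op l (\<lambda>y. u y + v y) = (\<lambda>y. op l u y + op l v y)"
  by (simp add: op_def A_add fun_eq_iff algebra_simps)

lemma op_scale: "op l (\<lambda>y. c * u y) = (\<lambda>y. c * op l u y)"
  by (simp add: op_def A_scale fun_eq_iff algebra_simps)

lemma op_diff: "op l (\<lambda>y. u y - v y) = (\<lambda>y. op l u y - op l v y)"
  by (simp add: op_def A_diff fun_eq_iff algebra_simps)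

lemma op_zero: "op l (\<lambda>y. 0) = (\<lambda>y. 0)"
  by (simp add: op_def A_zero fun_eq_iff)

lemma rX_add: "rX (\<lambda>y. u y + v y) = (\<lambda>y. rX u y + rX v y)"
  by (simp add: rX_def fun_eq_iff)
lemma rX_scale: "rX (\<lambda>y. c * u y) = (\<lambda>y. c * rX u y)"
  by (simp add: rX_def fun_eq_iff)
lemma rX_diff: "rX (\<lambda>y. u y - v y) = (\<lambda>y. rX u y - rX v y)"
  by (simp add: rX_def fun_eq_iff)

lemma pr_add: "pr L (\<lambda>y. u y + v y) = (\<lambda>y. pr L u y + pr L v y)"
  by (induction L) (simp_all add: rX_add op_add)
lemma pr_scale: "pr L (\<lambda>y. c * u y) = (\<lambda>y. c * pr L u y)"
  by (induction L) (simp_all add: rX_scale op_scale)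
lemma pr_diff: "pr L (\<lambda>y. u y - v y) = (\<lambda>y. pr L u y - pr L v y)"
  by (induction L) (simp_all add: rX_diff op_diff)
lemma pr_zero: "pr L (\<lambda>y. 0) = (\<lambda>y. 0)"
  by (induction L) (simp_all add: rX_def op_zero)
lemma pr_rX[simp]: "pr L (rX u) = pr L u"
proof (induction L)
  case Nil show ?case by (simp add: rX_def fun_eq_iff)
next
  case (Cons a L) thus ?case by simp
qed

lemma A_op: "A (op l u) = op l (A u)"
  unfolding op_def A_diff A_scale by simp

lemma A_pr: "A (pr L u) = pr L (A u)"
  by (induction L) (simp_all add: A_op)

lemma op_comm: "op l (op m u) = op m (op l u)"
  unfolding op_def A_diff A_scale by (simp add: fun_eq_iff algebra_simps)

lemma pr_op: "pr L (op l u) = op l (pr L u)"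
proof (induction L)
  case Nil
  have "rX (op l u) = op l (rX u)"
    using A_rX[of u] by (auto simp: rX_def op_def fun_eq_iff A_out)
  thus ?case by simp
next
  case (Cons m L)
  thus ?case by (simp add: op_comm)
qed

lemma pr_append: "pr (L1 @ L2) u = pr L1 (pr L2 u)"
  by (induction L1) simp_all

lemma pr_comm: "pr L1 (pr L2 u) = pr L2 (pr L1 u)"
proof (induction L1)
  case Nil
  show ?case by simp
next
  case (Cons l L1)
  have "pr (l # L1) (pr L2 u) = op l (pr L2 (pr L1 u))" using Cons by simp
  also have "\<dots> = pr L2 (op l (pr L1 u))" by (simp add: pr_op)
  finally show ?case by simp
qed

lemma pr_remove: "l \<in> set L \<Longrightarrow> pr L u = pr (remove1 l L) (op l u)"
proof (induction L)
  case Nil thus ?case by simp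
next
  case (Cons m L)
  show ?case
  proof (cases "m = l")
    case True thus ?thesis by (simp add: pr_op)
  next
    case False
    hence "l \<in> set L" using Cons by simp
    thus ?thesis using Cons False by simp
  qed
qed

lemma ip_add2: "ip u (\<lambda>y. v y + w y) = ip u v + ip u w"
  by (simp add: ip_def sum.distrib algebra_simps)
lemma ip_scale2: "ip u (\<lambda>y. c * v y) = cnj c * ip u v"
  by (simp add: ip_def sum_distrib_left algebra_simps)
lemma ip_diff2: "ip u (\<lambda>y. v y - w y) = ip u v - ip u w"
  by (simp add: ip_def sum_subtractf algebra_simps)
lemma ip_add1: "ip (\<lambda>y. v y + w y) u = ip v u + ip w u"
  by (simp add: ip_def sum.distrib algebra_simps)
lemma ip_scale1: "ip (\<lambda>y. c * v y) u = c * ip v u"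
  by (simp add: ip_def sum_distrib_left algebra_simps)
lemma ip_diff1: "ip (\<lambda>y. v y - w y) u = ip v u - ip w u"
  by (simp add: ip_def sum_subtractf algebra_simps)
lemma ip_zero2: "ip u (\<lambda>y. 0) = 0"
  by (simp add: ip_def)
lemma ip_zero1: "ip (\<lambda>y. 0) u = 0"
  by (simp add: ip_def)
lemma ip_rX1[simp]: "ip (rX u) v = ip u v"
  by (simp add: ip_def rX_def)
lemma ip_rX2[simp]: "ip u (rX v) = ip u v"
  by (simp add: ip_def rX_def)

lemma A_sa: "ip (A u) v = ip u (A v)"
proof -
  have "ip (A u) v = (\<Sum>y\<in>X. \<Sum>w\<in>X. (if card (y \<inter> w) = D - 1 then u w else 0) * cnj (v y))"
    by (simp add: ip_def johnson_A1_def sum_distrib_right)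
  also have "\<dots> = (\<Sum>w\<in>X. \<Sum>y\<in>X. (if card (y \<inter> w) = D - 1 then u w else 0) * cnj (v y))"
    by (rule sum.swap)
  also have "\<dots> = ip u (A v)"
    by (auto simp add: ip_def johnson_A1_def sum_distrib_left Int_commute intro!: sum.cong)
  finally show ?thesis .
qed

lemma op_sa: "ip (op l u) v = ip u (op l v)"
  by (simp add: op_def ip_diff1 ip_diff2 ip_scale1 ip_scale2 A_sa)

lemma pr_sa: "ip (pr L u) v = ip u (pr L v)"
proof (induction L arbitrary: v)
  case Nil thus ?case by simp
next
  case (Cons l L)
  have "ip (pr (l # L) u) v = ip (pr L u) (op l v)" by (simp add: op_sa)
  also have "\<dots> = ip u (pr L (op l v))" by (rule Cons)
  finally show ?case by (simp add: pr_op)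
qed

lemma ip_self_zero:
  assumes "onX w" "ip w w = 0" shows "w = (\<lambda>y. 0)"
proof -
  have "ip w w = (\<Sum>y\<in>X. complex_of_real ((cmod (w y))\<^sup>2))"
    unfolding ip_def by (rule sum.cong) (simp_all only: complex_norm_square)
  also have "\<dots> = complex_of_real (\<Sum>y\<in>X. (cmod (w y))\<^sup>2)"
    by (simp only: of_real_sum)
  finally have "ip w w = complex_of_real (\<Sum>y\<in>X. (cmod (w y))\<^sup>2)" .
  hence "complex_of_real (\<Sum>y\<in>X. (cmod (w y))\<^sup>2) = 0" using assms(2) by argo
  hence "(\<Sum>y\<in>X. (cmod (w y))\<^sup>2) = 0" by (simp only: of_real_eq_0_iff)
  hence "\<forall>y\<in>X. (cmod (w y))\<^sup>2 = 0" using finX by (simp add: sum_nonneg_eq_0_iff)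
  thus ?thesis using assms(1) by (auto simp: onX_def fun_eq_iff)
qed

end

lemma sum_ind: "finite A \<Longrightarrow> (\<Sum>x\<in>A. if P x then c else 0) = of_nat (card {x\<in>A. P x}) * c"
  by (simp add: sum.inter_filter[symmetric])

context jsetup
begin

fun Ec :: "nat \<Rightarrow> nat list \<Rightarrow> complex" where
  "Ec j [] = 1"
| "Ec j (l # L) = (if l = j then Ec j L else Ec j L / (th j - th l))"

lemma Eprod_pr: "johnson_Eprod N D j L u = (\<lambda>y. Ec j L * pr (filter (\<lambda>l. l \<noteq> j) L) u y)"
proof (induction L)
  case Nil thus ?case by (simp add: rX_def fun_eq_iff)
next
  case (Cons l L)
  show ?case
  proof (cases "l = j")
    case True thus ?thesis using Cons by simp
  next
    case False
    have "johnson_Eprod N D j (l # L) u =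
      (\<lambda>y. (A (\<lambda>y. Ec j L * pr (filter (\<lambda>l. l \<noteq> j) L) u y) y - th l * (Ec j L * pr (filter (\<lambda>l. l \<noteq> j) L) u y)) / (th j - th l))"
      using False Cons by (simp add: Let_def th_def)
    also have "\<dots> = (\<lambda>y. Ec j (l # L) * pr (filter (\<lambda>l. l \<noteq> j) (l # L)) u y)"
      using False by (simp add: A_scale op_def fun_eq_iff field_simps)
    finally show ?thesis .
  qed
qed

lemma E_pr: "johnson_E N D j u = (\<lambda>y. Ec j [0..<Suc D] * pr (filter (\<lambda>l. l \<noteq> j) [0..<Suc D]) u y)"
  by (simp add: johnson_E_def Eprod_pr)

lemma Ec_real: "cnj (Ec j L) = Ec j L"
  by (induction L) auto

lemma E_sa: "ip (johnson_E N D j u) v = ip u (johnson_E N D j v)"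
  by (simp add: E_pr ip_scale1 ip_scale2 pr_sa Ec_real)

lemma E_onX[simp]: "onX (johnson_E N D j u)"
  using pr_onX by (simp add: E_pr onX_def)

lemma E_add: "johnson_E N D j (\<lambda>y. u y + v y) = (\<lambda>y. johnson_E N D j u y + johnson_E N D j v y)"
  by (simp add: E_pr pr_add algebra_simps)
lemma E_diff: "johnson_E N D j (\<lambda>y. u y - v y) = (\<lambda>y. johnson_E N D j u y - johnson_E N D j v y)"
  by (simp add: E_pr pr_diff algebra_simps)
lemma E_scale: "johnson_E N D j (\<lambda>y. c * u y) = (\<lambda>y. c * johnson_E N D j u y)"
  by (simp add: E_pr pr_scale algebra_simps)
lemma E_zero: "johnson_E N D j (\<lambda>y. 0) = (\<lambda>y. 0)"
  by (simp add: E_pr pr_zero)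

lemma theta_mono:
  assumes "j < l" "l \<le> D" shows "johnson_theta N D l < johnson_theta N D j"
proof -
  have a: "real D - real l \<le> real D - real j" "0 \<le> real D - real l" using assms by auto
  have b: "real N - real D - real l \<le> real N - real D - real j" "0 \<le> real N - real D - real l"
    using assms DN by auto
  have "(real D - real l) * (real N - real D - real l) \<le> (real D - real j) * (real N - real D - real j)"
    using mult_mono[OF a(1) b(1) _ b(2)] a by linarith
  thus ?thesis using assms unfolding johnson_theta_def by simp
qed

lemma th_inj: "j \<le> D \<Longrightarrow> l \<le> D \<Longrightarrow> th j = th l \<Longrightarrow> j = l"
  using theta_mono[of j l] theta_mono[of l j] unfolding th_def
  by (metis linorder_neqE_nat of_real_eq_iff order_less_irrefl)

definition wS :: "nat set \<Rightarrow> nat set \<Rightarrow> complex" where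
  "wS S = (\<lambda>y. if y \<in> X \<and> S \<subseteq> y then 1 else 0)"

definition SS :: "nat \<Rightarrow> nat set set" where
  "SS i = {S. S \<subseteq> {1..N} \<and> card S < i}"

definition LU :: "nat \<Rightarrow> (nat set \<Rightarrow> complex) set" where
  "LU i = {u. \<exists>f. u = (\<lambda>y. \<Sum>S\<in>SS i. f S * wS S y)}"

lemma finite_SS: "finite (SS i)"
  by (rule finite_subset[of _ "Pow {1..N}"]) (auto simp: SS_def)

lemma wS_onX[simp]: "onX (wS S)"
  by (simp add: onX_def wS_def)

lemma LU_zero: "(\<lambda>y. 0) \<in> LU i"
  unfolding LU_def by (rule CollectI, rule exI[of _ "\<lambda>S. 0"]) simp

lemma LU_add: "u \<in> LU i \<Longrightarrow> v \<in> LU i \<Longrightarrow> (\<lambda>y. u y + v y) \<in> LU i"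
proof -
  assume "u \<in> LU i" "v \<in> LU i"
  then obtain f g where "u = (\<lambda>y. \<Sum>S\<in>SS i. f S * wS S y)" "v = (\<lambda>y. \<Sum>S\<in>SS i. g S * wS S y)"
    by (auto simp: LU_def)
  thus ?thesis unfolding LU_def
    by (intro CollectI exI[of _ "\<lambda>S. f S + g S"]) (simp add: sum.distrib algebra_simps)
qed

lemma LU_scale: "u \<in> LU i \<Longrightarrow> (\<lambda>y. c * u y) \<in> LU i"
proof -
  assume "u \<in> LU i"
  then obtain f where "u = (\<lambda>y. \<Sum>S\<in>SS i. f S * wS S y)" by (auto simp: LU_def)
  thus ?thesis unfolding LU_def
    by (intro CollectI exI[of _ "\<lambda>S. c * f S"]) (simp add: sum_distrib_left algebra_simps)
qed

lemma LU_diff: "u \<in> LU i \<Longrightarrow> v \<in> LU i \<Longrightarrow> (\<lambda>y. u y - v y) \<in> LU i"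
  using LU_add[of u i "\<lambda>y. (-1) * v y"] LU_scale[of v i "-1"] by simp

lemma LU_sum: "finite I \<Longrightarrow> (\<And>k. k \<in> I \<Longrightarrow> g k \<in> LU i) \<Longrightarrow> (\<lambda>y. \<Sum>k\<in>I. g k y) \<in> LU i"
proof (induction I rule: finite_induct)
  case empty thus ?case by (simp add: LU_zero)
next
  case (insert a I)
  thus ?case using LU_add[of "g a" i "\<lambda>y. \<Sum>k\<in>I. g k y"] by simp
qed

lemma LU_wS: "S \<subseteq> {1..N} \<Longrightarrow> card S < i \<Longrightarrow> wS S \<in> LU i"
proof -
  assume a: "S \<subseteq> {1..N}" "card S < i"
  hence "S \<in> SS i" by (simp add: SS_def)
  hence "wS S = (\<lambda>y. \<Sum>T\<in>SS i. (if T = S then 1 else 0) * wS T y)"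
    using finite_SS by (simp add: if_distrib[of "\<lambda>t. t * _"] sum.delta' cong: if_cong)
  thus ?thesis unfolding LU_def mem_Collect_eq by (rule exI[of _ "\<lambda>T. if T = S then 1 else 0"])
qed

lemma LU_mono: "u \<in> LU i \<Longrightarrow> i \<le> j \<Longrightarrow> u \<in> LU j"
proof -
  assume "u \<in> LU i" "i \<le> j"
  then obtain f where u: "u = (\<lambda>y. \<Sum>S\<in>SS i. f S * wS S y)" by (auto simp: LU_def)
  have "(\<lambda>y. \<Sum>S\<in>SS i. f S * wS S y) \<in> LU j"
    by (rule LU_sum[OF finite_SS], rule LU_scale, rule LU_wS) (use \<open>i \<le> j\<close> in \<open>auto simp: SS_def\<close>)
  thus ?thesis using u by simp
qed

lemma LU_onX: "u \<in> LU i \<Longrightarrow> onX u"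
  by (auto simp: LU_def onX_def wS_def)

lemma LU_0: "u \<in> LU 0 \<Longrightarrow> u = (\<lambda>y. 0)"
  by (auto simp: LU_def SS_def)

lemma LU_all: "onX u \<Longrightarrow> u \<in> LU (Suc D)"
proof -
  assume ou: "onX u"
  have "u = (\<lambda>y. \<Sum>S\<in>SS (Suc D). (if S \<in> X then u S else 0) * wS S y)"
  proof
    fix y
    show "u y = (\<Sum>S\<in>SS (Suc D). (if S \<in> X then u S else 0) * wS S y)"
    proof (cases "y \<in> X")
      case False thus ?thesis using ou by (simp add: onX_def wS_def)
    next
      case True
      have "(\<Sum>S\<in>SS (Suc D). (if S \<in> X then u S else 0) * wS S y) = (\<Sum>S\<in>SS (Suc D). if S = y then u S else 0)"
      proof (rule sum.cong[OF refl])
        fix S assume "S \<in> SS (Suc D)"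
        have "S \<in> X \<Longrightarrow> S \<subseteq> y \<Longrightarrow> S = y"
          using True by (metis X_fin X_iff card_subset_eq)
        thus "(if S \<in> X then u S else 0) * wS S y = (if S = y then u S else 0)"
          using True by (auto simp: wS_def)
      qed
      also have "\<dots> = u y" using True finite_SS by (simp add: SS_def X_iff)
      finally show ?thesis by simp
    qed
  qed
  thus ?thesis unfolding LU_def mem_Collect_eq by (rule exI[of _ "\<lambda>T. if T \<in> X then u T else 0"])
qed

lemma wS_big: "D < card S \<Longrightarrow> wS S = (\<lambda>y. 0)"
proof -
  assume a: "D < card S"
  { fix y assume "y \<in> X" "S \<subseteq> y"
    hence "card S \<le> D" using X_fin X_iff card_mono by metis
    hence False using a by simp }
  thus ?thesis by (auto simp: wS_def fun_eq_iff)
qed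

lemma ins_X: "y \<in> X \<Longrightarrow> a \<in> y \<Longrightarrow> b \<in> {1..N} - y \<Longrightarrow> insert b (y - {a}) \<in> X"
  using bij_betwE[OF nb_bij] by fastforce

lemma A_wS_pt:
  assumes S: "S \<subseteq> {1..N}" "card S \<le> D" and y: "y \<in> X"
  shows "A (wS S) y = th (card S) * wS S y + (of_nat D - of_nat (card S) + 1) * (\<Sum>b\<in>S. wS (S - {b}) y)"
proof -
  have fy: "finite y" and yN: "y \<subseteq> {1..N}" and cy: "card y = D" using y X_iff X_fin by auto
  have fS: "finite S" using S finite_subset by blast
  have key: "\<And>a b. a \<in> y \<Longrightarrow> b \<in> {1..N} - y \<Longrightarrow> (S \<subseteq> insert b (y - {a})) = (S - y \<subseteq> {b} \<and> a \<notin> S)"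
    by auto
  have "A (wS S) y = (\<Sum>a\<in>y. \<Sum>b\<in>{1..N} - y. if S - y \<subseteq> {b} \<and> a \<notin> S then 1 else 0)"
    using y by (auto simp: A_nb wS_def ins_X key intro!: sum.cong)
  also have "\<dots> = (\<Sum>a\<in>y. if a \<notin> S then of_nat (card {b \<in> {1..N} - y. S - y \<subseteq> {b}}) else 0)"
    by (rule sum.cong[OF refl]) (simp add: sum_ind)
  also have "\<dots> = of_nat (card (y - S)) * of_nat (card {b \<in> {1..N} - y. S - y \<subseteq> {b}})"
    using fy by (simp add: sum_ind set_diff_eq)
  finally have L: "A (wS S) y = of_nat (card (y - S)) * of_nat (card {b \<in> {1..N} - y. S - y \<subseteq> {b}})" .
  have R: "(\<Sum>b\<in>S. wS (S - {b}) y) = of_nat (card {b \<in> S. S - y \<subseteq> {b}})"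
  proof -
    have "(\<Sum>b\<in>S. wS (S - {b}) y) = (\<Sum>b\<in>S. if S - y \<subseteq> {b} then 1 else 0)"
      using y by (auto simp: wS_def intro!: sum.cong)
    thus ?thesis using fS by (simp add: sum_ind)
  qed
  have cyS: "card (y - S) + card (y \<inter> S) = D"
  proof -
    have "card (y - S) = card y - card (y \<inter> S)" using fy by (simp add: card_Diff_subset_Int)
    moreover have "card (y \<inter> S) \<le> card y" using fy by (simp add: card_mono)
    ultimately show ?thesis using cy by simp
  qed
  show ?thesis
  proof (cases "S \<subseteq> y")
    case True
    have c1: "card (y - S) = D - card S" using True fy cy fS by (simp add: card_Diff_subset)
    have c2: "{b \<in> {1..N} - y. S - y \<subseteq> {b}} = {1..N} - y" using True by auto
    have c3: "card ({1..N} - y) = N - D" using yN cy fy by (simp add: card_Diff_subset)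
    have c4: "{b \<in> S. S - y \<subseteq> {b}} = S" using True by auto
    have "A (wS S) y = of_nat ((D - card S) * (N - D))" using L c1 c2 c3 by simp
    moreover have "wS S y = 1" using True y by (simp add: wS_def)
    moreover have "real ((D - card S) * (N - D)) = johnson_theta N D (card S) + (real D - real (card S) + 1) * real (card S)"
    proof -
      have e1: "real (D - card S) = real D - real (card S)" using S by simp
      have e2: "real (N - D) = real N - real D" using DN by simp
      have "real ((D - card S) * (N - D)) = (real D - real (card S)) * (real N - real D)"
        by (simp only: of_nat_mult e1 e2)
      thus ?thesis unfolding johnson_theta_def by (simp add: algebra_simps)
    qed
    ultimately have "A (wS S) y = complex_of_real (johnson_theta N D (card S) + (real D - real (card S) + 1) * real (card S))"
      by (metis of_real_of_nat_eq)
    thus ?thesis using R c4 \<open>wS S y = 1\<close> unfolding th_def by simp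
  next
    case False
    have wz: "wS S y = 0" using False by (simp add: wS_def)
    show ?thesis
    proof (cases "card (S - y) = 1")
      case True
      then obtain c where c: "S - y = {c}" using card_1_singletonE by blast
      have c2: "{b \<in> {1..N} - y. S - y \<subseteq> {b}} = {c}" using c S by auto
      have c4: "{b \<in> S. S - y \<subseteq> {b}} = {c}" using c by auto
      have "card (S - y) = card S - card (S \<inter> y)" using fS by (simp add: card_Diff_subset_Int)
      moreover have "card (S \<inter> y) \<le> card S" using fS by (simp add: card_mono)
      ultimately have "card (y \<inter> S) = card S - 1" using True by (simp add: Int_commute)
      moreover have "card (y \<inter> S) \<le> card S" using fS by (simp add: card_mono)
      moreover have "1 \<le> card S" using True fS card_mono[of S "S - y"] by auto
      ultimately have c1: "card (y - S) = D + 1 - card S" using cyS True S by linarith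
      have "A (wS S) y = of_nat (D + 1 - card S)" using L c1 c2 by simp
      thus ?thesis using R c4 wz S by (simp add: of_nat_diff)
    next
      case False
      have ne: "S - y \<noteq> {}" using \<open>\<not> S \<subseteq> y\<close> by auto
      have nb: "\<And>b. \<not> S - y \<subseteq> {b}"
      proof
        fix b assume "S - y \<subseteq> {b}"
        hence "S - y = {b}" using ne by auto
        thus False using False by simp
      qed
      have "A (wS S) y = 0" using L nb by simp
      thus ?thesis using R wz nb by simp
    qed
  qed
qed

end

context jsetup
begin

lemma A_wS:
  assumes "S \<subseteq> {1..N}" "card S \<le> D"
  shows "A (wS S) = (\<lambda>y. th (card S) * wS S y + (of_nat D - of_nat (card S) + 1) * (\<Sum>b\<in>S. wS (S - {b}) y))"
proof
  fix y show "A (wS S) y = th (card S) * wS S y + (of_nat D - of_nat (card S) + 1) * (\<Sum>b\<in>S. wS (S - {b}) y)"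
    using A_wS_pt[OF assms] by (cases "y \<in> X") (auto simp: A_out wS_def)
qed

lemma op_sum: "op l (\<lambda>y. \<Sum>k\<in>I. g k y) = (\<lambda>y. \<Sum>k\<in>I. op l (g k) y)"
  unfolding op_def A_sum by (simp add: sum_subtractf sum_distrib_left)

lemma op_wS_LU: assumes "S \<subseteq> {1..N}" shows "op (card S) (wS S) \<in> LU (card S)"
proof (cases "card S \<le> D")
  case True
  have "op (card S) (wS S) = (\<lambda>y. (of_nat D - of_nat (card S) + 1) * (\<Sum>b\<in>S. wS (S - {b}) y))"
    using A_wS[OF assms True] by (simp add: op_def)
  moreover have "(\<lambda>y. (of_nat D - of_nat (card S) + 1) * (\<Sum>b\<in>S. wS (S - {b}) y)) \<in> LU (card S)"
  proof (rule LU_scale, rule LU_sum)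
    show "finite S" using assms finite_subset by blast
    fix b assume "b \<in> S"
    hence "card S > 0" using \<open>finite S\<close> card_gt_0_iff by blast
    thus "wS (S - {b}) \<in> LU (card S)"
      using assms \<open>finite S\<close> \<open>b \<in> S\<close> by (intro LU_wS) auto
  qed
  ultimately show ?thesis by simp
next
  case False
  thus ?thesis using wS_big[of S] by (simp add: op_zero LU_zero)
qed

lemma A_LU: assumes "u \<in> LU i" shows "A u \<in> LU i"
proof -
  obtain f where u: "u = (\<lambda>y. \<Sum>S\<in>SS i. f S * wS S y)" using assms by (auto simp: LU_def)
  have "A u = (\<lambda>y. \<Sum>S\<in>SS i. f S * A (wS S) y)"
    unfolding u A_sum by (simp add: A_scale)
  moreover have "(\<lambda>y. \<Sum>S\<in>SS i. f S * A (wS S) y) \<in> LU i"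
  proof (rule LU_sum[OF finite_SS], rule LU_scale)
    fix S assume S: "S \<in> SS i"
    hence SN: "S \<subseteq> {1..N}" and Si: "card S < i" by (auto simp: SS_def)
    have "A (wS S) = (\<lambda>y. op (card S) (wS S) y + th (card S) * wS S y)" by (simp add: op_def)
    moreover have "op (card S) (wS S) \<in> LU i" using LU_mono[OF op_wS_LU[OF SN]] Si by simp
    moreover have "(\<lambda>y. th (card S) * wS S y) \<in> LU i" using LU_scale[OF LU_wS[OF SN Si]] .
    ultimately show "A (wS S) \<in> LU i" using LU_add by simp
  qed
  ultimately show ?thesis by simp
qed

lemma op_LU: "u \<in> LU i \<Longrightarrow> op l u \<in> LU i"
  unfolding op_def by (intro LU_diff A_LU LU_scale)

lemma op_down: assumes "u \<in> LU (Suc i)" shows "op i u \<in> LU i"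
proof -
  obtain f where u: "u = (\<lambda>y. \<Sum>S\<in>SS (Suc i). f S * wS S y)" using assms by (auto simp: LU_def)
  have "op i u = (\<lambda>y. \<Sum>S\<in>SS (Suc i). f S * op i (wS S) y)"
    unfolding u op_sum by (simp add: op_scale)
  moreover have "(\<lambda>y. \<Sum>S\<in>SS (Suc i). f S * op i (wS S) y) \<in> LU i"
  proof (rule LU_sum[OF finite_SS], rule LU_scale)
    fix S assume S: "S \<in> SS (Suc i)"
    hence SN: "S \<subseteq> {1..N}" and Si: "card S \<le> i" by (auto simp: SS_def)
    show "op i (wS S) \<in> LU i"
    proof (cases "card S = i")
      case True thus ?thesis using op_wS_LU[OF SN] by simp
    next
      case False thus ?thesis using Si by (intro op_LU LU_wS SN) simp
    qed
  qed
  ultimately show ?thesis by simp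
qed

lemma pr_kill: "u \<in> LU i \<Longrightarrow> pr [0..<i] u = (\<lambda>y. 0)"
proof (induction i arbitrary: u)
  case 0
  hence "u = (\<lambda>y. 0)" by (rule LU_0)
  thus ?case by (simp add: rX_def)
next
  case (Suc i)
  have "pr [0..<Suc i] u = pr [0..<i] (pr [i] u)" by (simp only: upt_Suc_append[OF le0] pr_append)
  also have "pr [i] u = op i u" using LU_onX[OF Suc.prems] by simp
  also have "pr [0..<i] (op i u) = (\<lambda>y. 0)" using Suc.IH op_down[OF Suc.prems] by simp
  finally show ?case .
qed

lemma E_kill:
  assumes "u \<in> LU i" "i \<le> j" "i \<le> Suc D"
  shows "johnson_E N D j u = (\<lambda>y. 0)"
proof -
  have "[0..<Suc D] = [0..<i] @ [i..<Suc D]" using assms upt_add_eq_append[of 0 i "Suc D - i"] by simp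
  hence "filter (\<lambda>l. l \<noteq> j) [0..<Suc D] = [0..<i] @ filter (\<lambda>l. l \<noteq> j) [i..<Suc D]"
    using assms by (simp add: filter_True)
  hence "pr (filter (\<lambda>l. l \<noteq> j) [0..<Suc D]) u = pr [0..<i] (pr (filter (\<lambda>l. l \<noteq> j) [i..<Suc D]) u)"
    by (simp add: pr_append)
  also have "\<dots> = pr (filter (\<lambda>l. l \<noteq> j) [i..<Suc D]) (pr [0..<i] u)"
    by (rule pr_comm)
  also have "\<dots> = (\<lambda>y. 0)" using pr_kill[OF assms(1)] by (simp add: pr_zero)
  finally show ?thesis by (simp add: E_pr)
qed

lemma E_eig: assumes "j \<le> D" shows "op j (johnson_E N D j u) = (\<lambda>y. 0)"
proof -
  let ?F = "filter (\<lambda>l. l \<noteq> j) [0..<Suc D]"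
  have "pr [0..<Suc D] (rX u) = (\<lambda>y. 0)" by (rule pr_kill[OF LU_all]) simp
  moreover have "pr [0..<Suc D] (rX u) = pr (remove1 j [0..<Suc D]) (op j (rX u))"
    by (rule pr_remove) (use assms in \<open>simp only: set_upt, simp\<close>)
  moreover have "remove1 j [0..<Suc D] = ?F" by (rule remove1_distinct_filter) simp
  moreover have "rX (op j (rX u)) = rX (op j u)" using A_rX[of u, unfolded rX_def] by (simp add: rX_def op_def fun_eq_iff)
  hence "pr ?F (op j (rX u)) = pr ?F (op j u)" by (metis pr_rX)
  ultimately have z: "pr ?F (op j u) = (\<lambda>y. 0)" by simp
  have "op j (johnson_E N D j u) = (\<lambda>y. Ec j [0..<Suc D] * pr ?F (op j u) y)"
    by (simp add: E_pr op_scale pr_op)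
  thus ?thesis using z by simp
qed

lemma Eprod_fix:
  assumes "j \<le> D" "onX w" "op j w = (\<lambda>y. 0)" "set L \<subseteq> {..D}"
  shows "johnson_Eprod N D j L w = w"
  using assms(4)
proof (induction L)
  case Nil thus ?case using assms(2) by (simp add: rX_def[symmetric])
next
  case (Cons l L)
  hence IH: "johnson_Eprod N D j L w = w" and lD: "l \<le> D" by auto
  show ?case
  proof (cases "l = j")
    case True thus ?thesis using IH by simp
  next
    case False
    have ne: "th j - th l \<noteq> 0" using th_inj[OF assms(1) lD] False by auto
    have Aw: "\<And>y. A w y = th j * w y" using assms(3) by (simp add: op_def fun_eq_iff)
    have "johnson_Eprod N D j (l # L) w = (\<lambda>y. (A w y - th l * w y) / (th j - th l))"
      using False IH by (simp add: Let_def th_def)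
    also have "\<dots> = w" using ne by (simp add: Aw fun_eq_iff field_simps)
    finally show ?thesis .
  qed
qed

lemma E_fix: "j \<le> D \<Longrightarrow> onX w \<Longrightarrow> op j w = (\<lambda>y. 0) \<Longrightarrow> johnson_E N D j w = w"
  unfolding johnson_E_def by (rule Eprod_fix) auto

lemma E_idem: "j \<le> D \<Longrightarrow> johnson_E N D j (johnson_E N D j u) = johnson_E N D j u"
  by (rule E_fix) (simp_all add: E_eig)

lemma Eprod_L1:
  assumes "i \<le> D" "onX w" "op i w \<in> LU i" "set L \<subseteq> {..D}"
  shows "\<exists>u'\<in>LU i. johnson_Eprod N D i L w = (\<lambda>y. w y + u' y)"
  using assms(4)
proof (induction L)
  case Nil
  have "johnson_Eprod N D i [] w = (\<lambda>y. w y + 0)" using assms(2) by (simp add: rX_def[symmetric])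
  thus ?case by (rule bexI[of _ "\<lambda>y. 0"]) (rule LU_zero)
next
  case (Cons l L)
  then obtain u' where u': "u' \<in> LU i" "johnson_Eprod N D i L w = (\<lambda>y. w y + u' y)" and lD: "l \<le> D" by auto
  show ?case
  proof (cases "l = i")
    case True thus ?thesis using u' by auto
  next
    case False
    have ne: "th i - th l \<noteq> 0" using th_inj[OF assms(1) lD] False by auto
    have "johnson_Eprod N D i (l # L) w = (\<lambda>y. (A (\<lambda>y. w y + u' y) y - th l * (w y + u' y)) / (th i - th l))"
      using False u' by (simp add: Let_def th_def)
    also have "\<dots> = (\<lambda>y. w y + (op i w y + op l u' y) * (1 / (th i - th l)))"
      using ne by (simp add: A_add op_def fun_eq_iff field_simps)
    finally have e: "johnson_Eprod N D i (l # L) w = (\<lambda>y. w y + (op i w y + op l u' y) * (1 / (th i - th l)))" .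
    have mem: "(\<lambda>y. (op i w y + op l u' y) * (1 / (th i - th l))) \<in> LU i"
      using LU_scale[OF LU_add[OF assms(3) op_LU[OF u'(1)]], of "1 / (th i - th l)"]
      by (simp add: mult.commute)
    show ?thesis using mem e by (intro bexI[of _ "\<lambda>y. (op i w y + op l u' y) * (1 / (th i - th l))"]) auto
  qed
qed

lemma E_L1:
  assumes "i \<le> D" "onX w" "op i w \<in> LU i"
  shows "\<exists>u'\<in>LU i. johnson_E N D i w = (\<lambda>y. w y + u' y)"
  unfolding johnson_E_def by (rule Eprod_L1[OF assms]) auto

lemma all_E_zero:
  assumes w: "onX w" and E0: "\<And>l. l \<le> D \<Longrightarrow> johnson_E N D l w = (\<lambda>y. 0)"
  shows "w = (\<lambda>y. 0)"
proof -
  have "\<forall>k \<le> Suc D. w \<in> LU (Suc D - k)"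
  proof (intro allI impI)
    fix k assume "k \<le> Suc D"
    thus "w \<in> LU (Suc D - k)"
    proof (induction k)
      case 0 thus ?case using LU_all[OF w] by simp
    next
      case (Suc k)
      define i where "i = D - k"
      have wi: "w \<in> LU (Suc i)" using Suc i_def by (simp add: Suc_diff_le)
      have iD: "i \<le> D" using i_def by simp
      obtain u' where u': "u' \<in> LU i" "johnson_E N D i w = (\<lambda>y. w y + u' y)"
        using E_L1[OF iD w op_down[OF wi]] by blast
      hence "(\<lambda>y. w y + u' y) = (\<lambda>y. 0)" using E0[OF iD] by simp
      hence "w = (\<lambda>y. (-1) * u' y)" by (simp add: fun_eq_iff add_eq_0_iff)
      hence "w \<in> LU i" using LU_scale[OF u'(1), of "-1"] by simp
      thus ?case using i_def Suc by simp
    qed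
  qed
  hence "w \<in> LU (Suc D - Suc D)" by blast
  hence "w \<in> LU 0" by simp
  thus ?thesis by (rule LU_0)
qed

lemma eig_LU:
  assumes j: "j \<le> D" and u: "onX u" and e: "op j u = (\<lambda>y. 0)"
  shows "u \<in> LU (Suc j)"
proof -
  have Au: "\<And>y. A u y = th j * u y" using e by (simp add: op_def fun_eq_iff)
  have "\<forall>k \<le> D - j. u \<in> LU (Suc D - k)"
  proof (intro allI impI)
    fix k assume "k \<le> D - j"
    thus "u \<in> LU (Suc D - k)"
    proof (induction k)
      case 0 thus ?case using LU_all[OF u] by simp
    next
      case (Suc k)
      define i where "i = D - k"
      have ui: "u \<in> LU (Suc i)" using Suc i_def by (simp add: Suc_diff_le)
      have iD: "i \<le> D" and ij: "j < i" using i_def Suc by auto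
      have ne: "th j - th i \<noteq> 0" using th_inj[OF j iD] ij by auto
      have "op i u = (\<lambda>y. (th j - th i) * u y)" by (simp add: op_def Au fun_eq_iff algebra_simps)
      hence eq: "u = (\<lambda>y. (1 / (th j - th i)) * op i u y)" using ne by (simp add: fun_eq_iff)
      have "(\<lambda>y. (1 / (th j - th i)) * op i u y) \<in> LU i" by (rule LU_scale[OF op_down[OF ui]])
      hence "u \<in> LU i" using eq by simp
      thus ?case using i_def Suc by simp
    qed
  qed
  hence "u \<in> LU (Suc D - (D - j))" by blast
  moreover have "Suc D - (D - j) = Suc j" using j by arith
  ultimately show ?thesis by simp
qed

lemma E_LU: "j \<le> D \<Longrightarrow> johnson_E N D j u \<in> LU (Suc j)"
  by (rule eig_LU) (simp_all add: E_eig)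

lemma perp_step:
  assumes iD: "i \<le> D" and p: "\<forall>u\<in>LU i. ip v u = 0" and E0: "johnson_E N D i v = (\<lambda>y. 0)"
  shows "\<forall>u\<in>LU (Suc i). ip v u = 0"
proof
  fix u assume u: "u \<in> LU (Suc i)"
  obtain u' where u': "u' \<in> LU i" "johnson_E N D i u = (\<lambda>y. u y + u' y)"
    using E_L1[OF iD LU_onX[OF u] op_down[OF u]] by blast
  have "u = (\<lambda>y. johnson_E N D i u y - u' y)" using u'(2) by simp
  hence "ip v u = ip v (\<lambda>y. johnson_E N D i u y - u' y)" by simp
  also have "\<dots> = ip v (johnson_E N D i u) - ip v u'" by (rule ip_diff2)
  finally have "ip v u = ip v (johnson_E N D i u) - ip v u'" .
  also have "ip v (johnson_E N D i u) = ip (johnson_E N D i v) u" by (simp add: E_sa)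
  also have "\<dots> = 0" using E0 by (simp add: ip_zero1)
  finally show "ip v u = 0" using p u'(1) by simp
qed

lemma perp_E:
  assumes p: "\<forall>u\<in>LU i. ip v u = 0" and ji: "j < i" and jD: "j \<le> D"
  shows "johnson_E N D j v = (\<lambda>y. 0)"
proof -
  let ?w = "johnson_E N D j v"
  have "ip ?w ?w = ip v (johnson_E N D j ?w)" by (simp add: E_sa)
  also have "\<dots> = ip v ?w" using E_idem[OF jD] by simp
  also have "\<dots> = 0" using p LU_mono[OF E_LU[OF jD]] ji by simp
  finally show ?thesis by (rule ip_self_zero[OF E_onX])
qed

lemma perp_LU:
  assumes v: "\<And>j. j < i \<Longrightarrow> johnson_E N D j v = (\<lambda>y. 0)" and iD: "i \<le> Suc D"
  shows "\<forall>u\<in>LU i. ip v u = 0"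
  using v iD
proof (induction i)
  case 0 thus ?case using LU_0 ip_zero2 by blast
next
  case (Suc i)
  have "\<forall>u\<in>LU i. ip v u = 0" using Suc by simp
  moreover have "johnson_E N D i v = (\<lambda>y. 0)" using Suc.prems by simp
  moreover have "i \<le> D" using Suc.prems by simp
  ultimately show ?case using perp_step by blast
qed

end

lemma RI:
  assumes P: "finite P"
  shows "(\<Sum>R\<in>{R. U \<subseteq> R \<and> R \<subseteq> P}. \<Sum>b\<in>P - R. F (insert b R) R)
       = (\<Sum>T\<in>{T. U \<subseteq> T \<and> T \<subseteq> P}. \<Sum>a\<in>T - U. F T (T - {a}))"
proof -
  have f1: "finite {R. U \<subseteq> R \<and> R \<subseteq> P}"
    by (rule finite_subset[of _ "Pow P"]) (auto simp: P)
  have f2: "\<And>T. T \<in> {T. U \<subseteq> T \<and> T \<subseteq> P} \<Longrightarrow> finite (T - U)"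
    using P finite_subset by blast
  have "(\<Sum>R\<in>{R. U \<subseteq> R \<and> R \<subseteq> P}. \<Sum>b\<in>P - R. F (insert b R) R)
      = (\<Sum>(R,b)\<in>Sigma {R. U \<subseteq> R \<and> R \<subseteq> P} (\<lambda>R. P - R). F (insert b R) R)"
    using f1 P by (subst sum.Sigma) auto
  also have "\<dots> = (\<Sum>(T,a)\<in>Sigma {T. U \<subseteq> T \<and> T \<subseteq> P} (\<lambda>T. T - U). F T (T - {a}))"
    by (rule sum.reindex_bij_witness[where i="\<lambda>(T,a). (T - {a}, a)" and j="\<lambda>(R,b). (insert b R, b)"]) auto
  also have "\<dots> = (\<Sum>T\<in>{T. U \<subseteq> T \<and> T \<subseteq> P}. \<Sum>a\<in>T - U. F T (T - {a}))"
    using f1 f2 by (subst sum.Sigma) auto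
  finally show ?thesis .
qed

lemma RI0:
  assumes P: "finite P"
  shows "(\<Sum>R\<in>Pow P. \<Sum>b\<in>P - R. F (insert b R) R) = (\<Sum>T\<in>Pow P. \<Sum>a\<in>T. F T (T - {a}))"
  using RI[OF P, where U="{}" and F=F] by (simp add: Pow_def)

locale harm = jsetup +
  fixes r :: nat and h :: "nat set \<Rightarrow> complex"
  assumes r1: "1 \<le> r"
    and h_supp: "\<And>T. h T \<noteq> 0 \<Longrightarrow> T \<subseteq> x \<and> card T = r"
    and h_harm: "\<And>R. R \<subseteq> x \<Longrightarrow> card R + 1 = r \<Longrightarrow> (\<Sum>b\<in>x - R. h (insert b R)) = 0"
begin

definition Gh :: "nat set \<Rightarrow> complex" where
  "Gh S = (\<Sum>T\<in>Pow S. h T)"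

lemma G1:
  assumes S: "finite S"
  shows "(\<Sum>a\<in>S. Gh (S - {a})) = (of_nat (card S) - of_nat r) * Gh S"
proof -
  have "(\<Sum>a\<in>S. Gh (S - {a})) = (\<Sum>a\<in>S. \<Sum>T\<in>Pow S. if a \<notin> T then h T else 0)"
  proof (rule sum.cong[OF refl])
    fix a assume "a \<in> S"
    have eq: "Pow (S - {a}) = {T \<in> Pow S. a \<notin> T}" by auto
    have "Gh (S - {a}) = sum h {T \<in> Pow S. a \<notin> T}" unfolding Gh_def by (simp only: eq)
    also have "\<dots> = (\<Sum>T\<in>Pow S. if a \<notin> T then h T else 0)" by (rule sum.inter_filter) (simp add: S)
    finally show "Gh (S - {a}) = (\<Sum>T\<in>Pow S. if a \<notin> T then h T else 0)" .
  qed
  also have "\<dots> = (\<Sum>T\<in>Pow S. \<Sum>a\<in>S. if a \<notin> T then h T else 0)" by (rule sum.swap)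
  also have "\<dots> = (\<Sum>T\<in>Pow S. (of_nat (card S) - of_nat r) * h T)"
  proof (rule sum.cong[OF refl])
    fix T assume T: "T \<in> Pow S"
    have "(\<Sum>a\<in>S. if a \<notin> T then h T else 0) = of_nat (card {a \<in> S. a \<notin> T}) * h T"
      using S by (simp add: sum_ind)
    also have "\<dots> = (of_nat (card S) - of_nat r) * h T"
    proof (cases "h T = 0")
      case False
      hence cT: "card T = r" using h_supp by blast
      have "{a \<in> S. a \<notin> T} = S - T" by auto
      hence "card {a \<in> S. a \<notin> T} = card S - card T" using T S by (simp add: card_Diff_subset finite_subset)
      moreover have "card T \<le> card S" using T S card_mono by blast
      ultimately show ?thesis using cT by (simp add: of_nat_diff)
    qed simp
    finally show "(\<Sum>a\<in>S. if a \<notin> T then h T else 0) = (of_nat (card S) - of_nat r) * h T" .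
  qed
  also have "\<dots> = (of_nat (card S) - of_nat r) * Gh S" by (simp add: Gh_def sum_distrib_left)
  finally show ?thesis .
qed

lemma Gh_insert:
  assumes S: "finite S" and b: "b \<notin> S"
  shows "Gh (insert b S) = Gh S + (\<Sum>R\<in>Pow S. h (insert b R))"
proof -
  have "Gh (insert b S) = (\<Sum>T\<in>Pow S \<union> insert b ` Pow S. h T)" by (simp add: Gh_def Pow_insert)
  also have "\<dots> = (\<Sum>T\<in>Pow S. h T) + (\<Sum>T\<in>insert b ` Pow S. h T)"
    using S b by (intro sum.union_disjoint) auto
  also have "(\<Sum>T\<in>insert b ` Pow S. h T) = (\<Sum>R\<in>Pow S. h (insert b R))"
  proof (rule sum.reindex_cong[of "insert b"])
    show "inj_on (insert b) (Pow S)" using b by (auto simp: inj_on_def)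
  qed auto
  finally show ?thesis by (simp add: Gh_def)
qed

lemma hz: assumes R: "R \<subseteq> x" shows "(\<Sum>b\<in>x - R. h (insert b R)) = 0"
proof (cases "card R + 1 = r")
  case True thus ?thesis using h_harm R by blast
next
  case False
  have fR: "finite R" using R x_fin finite_subset by blast
  { fix b assume "b \<in> x - R"
    hence "card (insert b R) = card R + 1" using fR by simp
    hence "h (insert b R) = 0" using False h_supp by fastforce }
  thus ?thesis by simp
qed

lemma G2:
  assumes S: "S \<subseteq> x"
  shows "(\<Sum>b\<in>x - S. Gh (insert b S)) = (of_nat D - of_nat (card S) - of_nat r) * Gh S"
proof -
  have fS: "finite S" using S x_fin finite_subset by blast
  have "(\<Sum>b\<in>x - S. Gh (insert b S)) = (\<Sum>b\<in>x - S. Gh S + (\<Sum>R\<in>Pow S. h (insert b R)))"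
    using fS by (intro sum.cong refl Gh_insert) auto
  also have "\<dots> = of_nat (card (x - S)) * Gh S + (\<Sum>b\<in>x - S. \<Sum>R\<in>Pow S. h (insert b R))"
    by (simp add: sum.distrib)
  also have "(\<Sum>b\<in>x - S. \<Sum>R\<in>Pow S. h (insert b R)) = (\<Sum>R\<in>Pow S. \<Sum>b\<in>x - S. h (insert b R))"
    by (rule sum.swap)
  also have "\<dots> = (\<Sum>R\<in>Pow S. - (\<Sum>b\<in>S - R. h (insert b R)))"
  proof (rule sum.cong[OF refl])
    fix R assume R: "R \<in> Pow S"
    have "x - R = (x - S) \<union> (S - R)" using R S by auto
    hence "(\<Sum>b\<in>x - R. h (insert b R)) = (\<Sum>b\<in>x - S. h (insert b R)) + (\<Sum>b\<in>S - R. h (insert b R))"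
      using x_fin fS by (simp add: sum.union_disjoint Diff_Int_distrib2 Int_Diff) (subst sum.union_disjoint, auto)
    moreover have "(\<Sum>b\<in>x - R. h (insert b R)) = 0" using hz R S by blast
    ultimately show "(\<Sum>b\<in>x - S. h (insert b R)) = - (\<Sum>b\<in>S - R. h (insert b R))"
      by (simp add: eq_neg_iff_add_eq_0)
  qed
  also have "\<dots> = - (\<Sum>R\<in>Pow S. \<Sum>b\<in>S - R. h (insert b R))" by (simp add: sum_negf)
  also have "(\<Sum>R\<in>Pow S. \<Sum>b\<in>S - R. h (insert b R)) = (\<Sum>T\<in>Pow S. \<Sum>a\<in>T. h T)"
    using RI0[OF fS, of "\<lambda>T R. h T"] by simp
  also have "\<dots> = (\<Sum>T\<in>Pow S. of_nat r * h T)"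
  proof (rule sum.cong[OF refl])
    fix T assume "T \<in> Pow S"
    show "(\<Sum>a\<in>T. h T) = of_nat r * h T"
      using h_supp[of T] by (cases "h T = 0") auto
  qed
  also have "\<dots> = of_nat r * Gh S" by (simp add: Gh_def sum_distrib_left)
  also have "card (x - S) = D - card S" using S fS x_card by (simp add: card_Diff_subset)
  finally show ?thesis
    using card_mono[OF x_fin S] x_card by (simp add: of_nat_diff algebra_simps)
qed

end

context harm
begin

lemma Gh_small: "finite S \<Longrightarrow> card S < r \<Longrightarrow> Gh S = 0"
  unfolding Gh_def
proof (rule sum.neutral, rule ballI)
  fix T assume "finite S" "card S < r" "T \<in> Pow S"
  hence "card T < r" using card_mono[of S T] by auto
  thus "h T = 0" using h_supp by fastforce
qed

lemma Gh_r: assumes "finite T" "card T = r" shows "Gh T = h T"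
proof -
  have "Gh T = (\<Sum>T'\<in>Pow T. if T' = T then h T else 0)"
    unfolding Gh_def
  proof (rule sum.cong[OF refl])
    fix T' assume T': "T' \<in> Pow T"
    show "h T' = (if T' = T then h T else 0)"
    proof (cases "T' = T")
      case False
      hence "T' \<subset> T" using T' by auto
      hence "card T' < r" using psubset_card_mono assms by metis
      thus ?thesis using h_supp[of T'] False by auto
    qed simp
  qed
  thus ?thesis using assms by simp
qed

definition LL :: "nat \<Rightarrow> nat set set" where
  "LL m = {S. S \<subseteq> x \<and> card S = m}"

lemma finite_LL: "finite (LL m)"
  by (rule finite_subset[of _ "Pow x"]) (auto simp: LL_def x_fin)

lemma LL_inter: "{R \<in> Pow x. card R = m} = LL m"
  by (auto simp: LL_def)

definition gg :: "nat \<Rightarrow> complex" where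
  "gg m = (\<Sum>S\<in>LL m. Gh S * cnj (Gh S))"

definition ggr :: "nat \<Rightarrow> real" where
  "ggr m = (\<Sum>S\<in>LL m. (cmod (Gh S))\<^sup>2)"

lemma gg_ggr: "gg m = of_real (ggr m)"
  unfolding gg_def ggr_def of_real_sum by (rule sum.cong[OF refl]) (simp only: complex_norm_square)

lemma ggr_nonneg: "0 \<le> ggr m"
  unfolding ggr_def by (rule sum_nonneg) simp

lemma ggr_zero: "ggr m = 0 \<Longrightarrow> S \<subseteq> x \<Longrightarrow> card S = m \<Longrightarrow> Gh S = 0"
  unfolding ggr_def using finite_LL[of m] by (simp add: sum_nonneg_eq_0_iff LL_def)

lemma norm_rec:
  "(of_nat m + 1 - of_nat r) * gg (Suc m) = (of_nat D - of_nat m - of_nat r) * gg m"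
proof -
  let ?F = "\<lambda>T R. if card R = m then Gh R * cnj (Gh T) else 0"
  have RI': "(\<Sum>R\<in>Pow x. \<Sum>b\<in>x - R. ?F (insert b R) R) = (\<Sum>T\<in>Pow x. \<Sum>a\<in>T. ?F T (T - {a}))"
    by (rule RI0[OF x_fin])
  have "(\<Sum>R\<in>Pow x. \<Sum>b\<in>x - R. ?F (insert b R) R) = (\<Sum>R\<in>Pow x. if card R = m then (of_nat D - of_nat m - of_nat r) * (Gh R * cnj (Gh R)) else 0)"
  proof (rule sum.cong[OF refl])
    fix R assume R: "R \<in> Pow x"
    have "(\<Sum>b\<in>x - R. ?F (insert b R) R) = (if card R = m then Gh R * cnj (\<Sum>b\<in>x - R. Gh (insert b R)) else 0)"
      by (simp add: sum_distrib_left)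
    also have "\<dots> = (if card R = m then (of_nat D - of_nat m - of_nat r) * (Gh R * cnj (Gh R)) else 0)"
      using G2[of R] R by simp
    finally show "(\<Sum>b\<in>x - R. ?F (insert b R) R) = (if card R = m then (of_nat D - of_nat m - of_nat r) * (Gh R * cnj (Gh R)) else 0)" .
  qed
  also have "\<dots> = (of_nat D - of_nat m - of_nat r) * gg m"
    by (simp add: sum.inter_filter[symmetric] x_fin LL_def gg_def sum_distrib_left)
  finally have L: "(\<Sum>R\<in>Pow x. \<Sum>b\<in>x - R. ?F (insert b R) R) = (of_nat D - of_nat m - of_nat r) * gg m" .
  have "(\<Sum>T\<in>Pow x. \<Sum>a\<in>T. ?F T (T - {a})) = (\<Sum>T\<in>Pow x. if card T = Suc m then (of_nat m + 1 - of_nat r) * (Gh T * cnj (Gh T)) else 0)"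
  proof (rule sum.cong[OF refl])
    fix T assume T: "T \<in> Pow x"
    have fT: "finite T" using T x_fin finite_subset by auto
    have "(\<Sum>a\<in>T. ?F T (T - {a})) = (\<Sum>a\<in>T. if card T = Suc m then Gh (T - {a}) * cnj (Gh T) else 0)"
    proof (rule sum.cong[OF refl])
      fix a assume "a \<in> T"
      hence "card (T - {a}) = card T - 1" "card T \<ge> 1" using fT by (auto simp: card_gt_0_iff Suc_le_eq)
      hence "(card (T - {a}) = m) = (card T = Suc m)" by auto
      thus "?F T (T - {a}) = (if card T = Suc m then Gh (T - {a}) * cnj (Gh T) else 0)" by simp
    qed
    also have "\<dots> = (if card T = Suc m then (\<Sum>a\<in>T. Gh (T - {a})) * cnj (Gh T) else 0)"
      by (simp add: sum_distrib_right)
    also have "\<dots> = (if card T = Suc m then (of_nat m + 1 - of_nat r) * (Gh T * cnj (Gh T)) else 0)"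
    proof -
      have e: "(\<Sum>a\<in>T. Gh (T - {a})) = (of_nat m + 1 - of_nat r) * Gh T" if "card T = Suc m"
        using G1[OF fT] that by simp
      show ?thesis by (auto simp: e mult.assoc)
    qed
    finally show "(\<Sum>a\<in>T. ?F T (T - {a})) = (if card T = Suc m then (of_nat m + 1 - of_nat r) * (Gh T * cnj (Gh T)) else 0)" .
  qed
  also have "\<dots> = (of_nat m + 1 - of_nat r) * gg (Suc m)"
    by (simp add: sum.inter_filter[symmetric] x_fin LL_def gg_def sum_distrib_left)
  finally have R: "(\<Sum>T\<in>Pow x. \<Sum>a\<in>T. ?F T (T - {a})) = (of_nat m + 1 - of_nat r) * gg (Suc m)" .
  show ?thesis using L R RI' by simp
qed

lemma norm_rec_real:
  "(real m + 1 - real r) * ggr (Suc m) = (real D - real m - real r) * ggr m"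
proof -
  have "complex_of_real ((real m + 1 - real r) * ggr (Suc m)) = complex_of_real ((real D - real m - real r) * ggr m)"
    using norm_rec[of m] by (simp add: gg_ggr)
  thus ?thesis by (simp only: of_real_eq_iff)
qed

lemma Gh_vanish:
  assumes S: "S \<subseteq> x" and cS: "D - r < card S"
  shows "Gh S = 0"
proof -
  have fS: "finite S" using S x_fin finite_subset by blast
  show ?thesis
  proof (cases "D < 2 * r")
    case True
    have "\<forall>T. h T = 0"
    proof (cases "r \<le> D")
      case False
      { fix T assume "h T \<noteq> 0"
        hence "T \<subseteq> x" "card T = r" using h_supp by auto
        hence False using False card_mono[OF x_fin] x_card by fastforce }
      thus ?thesis by blast
    next
      case rD: True
      have "(real r + 1 - real r) * ggr (Suc r) = (real D - real r - real r) * ggr r"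
        by (rule norm_rec_real)
      hence "ggr (Suc r) = (real D - 2 * real r) * ggr r" by simp
      moreover have "real D - 2 * real r < 0" using True by linarith
      ultimately have "ggr r = 0" using ggr_nonneg[of r] ggr_nonneg[of "Suc r"]
        by (smt (verit) mult_neg_pos)
      { fix T assume "h T \<noteq> 0"
        hence T: "T \<subseteq> x" "card T = r" using h_supp by auto
        hence "Gh T = 0" using ggr_zero \<open>ggr r = 0\<close> by blast
        moreover have "Gh T = h T" using Gh_r T x_fin finite_subset by blast
        ultimately have False using \<open>h T \<noteq> 0\<close> by simp }
      thus ?thesis by blast
    qed
    thus ?thesis by (simp add: Gh_def)
  next
    case False
    let ?m = "D - r"
    have "(real ?m + 1 - real r) * ggr (Suc ?m) = (real D - real ?m - real r) * ggr ?m"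
      by (rule norm_rec_real)
    moreover have "real D - real ?m - real r = 0" using False by simp
    moreover have "real ?m + 1 - real r > 0" using False by simp
    ultimately have g0: "ggr (Suc ?m) = 0" by simp
    have "\<forall>S. S \<subseteq> x \<longrightarrow> card S = Suc ?m + n \<longrightarrow> Gh S = 0" for n
    proof (induction n)
      case 0 thus ?case using ggr_zero[OF g0] by simp
    next
      case (Suc n)
      show ?case
      proof (intro allI impI)
        fix S assume S: "S \<subseteq> x" "card S = Suc ?m + Suc n"
        have fS: "finite S" using S x_fin finite_subset by blast
        have "(\<Sum>a\<in>S. Gh (S - {a})) = 0"
        proof (rule sum.neutral, rule ballI)
          fix a assume "a \<in> S"
          hence "card (S - {a}) = Suc ?m + n" using S fS by simp
          thus "Gh (S - {a}) = 0" using Suc.IH S by blast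
        qed
        hence "(of_nat (card S) - of_nat r) * Gh S = 0" using G1[OF fS] by simp
        moreover have "of_nat (card S) - of_nat r \<noteq> (0::complex)"
        proof
          assume "of_nat (card S) - of_nat r = (0::complex)"
          hence "card S = r" by simp
          thus False using S False by simp
        qed
        ultimately show "Gh S = 0" by simp
      qed
    qed
    moreover have "card S = Suc ?m + (card S - Suc ?m)" using cS by simp
    ultimately show ?thesis using S by blast
  qed
qed

lemma Gh_nz:
  assumes hnz: "h T0 \<noteq> 0" and m: "r \<le> m" "m \<le> D - r"
  shows "\<exists>S. S \<subseteq> x \<and> card S = m \<and> Gh S \<noteq> 0"
proof -
  have "\<forall>m. r \<le> m \<longrightarrow> m = r + n \<longrightarrow> m \<le> D - r \<longrightarrow> (\<exists>S. S \<subseteq> x \<and> card S = m \<and> Gh S \<noteq> 0)" for n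
  proof (induction n)
    case 0
    have T: "T0 \<subseteq> x" "card T0 = r" using h_supp hnz by auto
    hence "Gh T0 = h T0" using Gh_r x_fin finite_subset by blast
    thus ?case using T hnz by auto
  next
    case (Suc n)
    show ?case
    proof (intro allI impI)
      fix m assume m: "r \<le> m" "m = r + Suc n" "m \<le> D - r"
      obtain S where S: "S \<subseteq> x" "card S = r + n" "Gh S \<noteq> 0" using Suc.IH m by force
      have fS: "finite S" using S x_fin finite_subset by blast
      have "(\<Sum>b\<in>x - S. Gh (insert b S)) = (of_nat D - of_nat (card S) - of_nat r) * Gh S"
        by (rule G2[OF S(1)])
      moreover have "of_nat D - of_nat (card S) - of_nat r \<noteq> (0::complex)"
      proof
        assume "of_nat D - of_nat (card S) - of_nat r = (0::complex)"
        hence "D = card S + r" by (simp add: algebra_simps) (metis of_nat_add of_nat_eq_iff add.commute)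
        thus False using m S by simp
      qed
      ultimately have "(\<Sum>b\<in>x - S. Gh (insert b S)) \<noteq> 0" using S by simp
      then obtain b where b: "b \<in> x - S" "Gh (insert b S) \<noteq> 0" by (meson sum.neutral)
      have "insert b S \<subseteq> x" "card (insert b S) = m" using b S fS m by auto
      thus "\<exists>S. S \<subseteq> x \<and> card S = m \<and> Gh S \<noteq> 0" using b by blast
    qed
  qed
  thus ?thesis using m by (metis le_add_diff_inverse)
qed

lemma FU:
  assumes U: "U \<subseteq> x" "card U < r"
  shows "(\<Sum>S\<in>{S. U \<subseteq> S \<and> S \<subseteq> x \<and> card S = m}. Gh S) = 0"
proof (induction m)
  case 0
  show ?case by (rule sum.neutral) (use r1 x_fin finite_subset in \<open>auto intro!: Gh_small\<close>)
next
  case (Suc m)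
  show ?case
  proof (cases "Suc m < r")
    case True
    show ?thesis by (rule sum.neutral) (use True x_fin finite_subset in \<open>auto intro!: Gh_small\<close>)
  next
    case False
    let ?F = "\<lambda>T R. if card R = m then Gh T else 0"
    have fU: "finite U" using U x_fin finite_subset by blast
    have RI': "(\<Sum>R\<in>{R. U \<subseteq> R \<and> R \<subseteq> x}. \<Sum>b\<in>x - R. ?F (insert b R) R) = (\<Sum>T\<in>{T. U \<subseteq> T \<and> T \<subseteq> x}. \<Sum>a\<in>T - U. ?F T (T - {a}))"
      by (rule RI[OF x_fin])
    have fin1: "finite {R. U \<subseteq> R \<and> R \<subseteq> x}" by (rule finite_subset[of _ "Pow x"]) (auto simp: x_fin)
    have "(\<Sum>R\<in>{R. U \<subseteq> R \<and> R \<subseteq> x}. \<Sum>b\<in>x - R. ?F (insert b R) R)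
        = (\<Sum>R\<in>{R. U \<subseteq> R \<and> R \<subseteq> x}. if card R = m then (of_nat D - of_nat m - of_nat r) * Gh R else 0)"
      by (rule sum.cong[OF refl]) (use G2 in auto)
    also have "\<dots> = (of_nat D - of_nat m - of_nat r) * (\<Sum>S\<in>{S. U \<subseteq> S \<and> S \<subseteq> x \<and> card S = m}. Gh S)"
      using fin1 by (simp add: sum.inter_filter[symmetric] sum_distrib_left conj_assoc)
    also have "\<dots> = 0" using Suc.IH by simp
    finally have L: "(\<Sum>R\<in>{R. U \<subseteq> R \<and> R \<subseteq> x}. \<Sum>b\<in>x - R. ?F (insert b R) R) = 0" .
    have "(\<Sum>T\<in>{T. U \<subseteq> T \<and> T \<subseteq> x}. \<Sum>a\<in>T - U. ?F T (T - {a}))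
        = (\<Sum>T\<in>{T. U \<subseteq> T \<and> T \<subseteq> x}. if card T = Suc m then (of_nat (Suc m) - of_nat (card U)) * Gh T else 0)"
    proof (rule sum.cong[OF refl])
      fix T assume T: "T \<in> {T. U \<subseteq> T \<and> T \<subseteq> x}"
      have fT: "finite T" using T x_fin finite_subset by auto
      have "(\<Sum>a\<in>T - U. ?F T (T - {a})) = (\<Sum>a\<in>T - U. if card T = Suc m then Gh T else 0)"
      proof (rule sum.cong[OF refl])
        fix a assume "a \<in> T - U"
        hence "card (T - {a}) = card T - 1" "card T \<ge> 1" using fT by (auto simp: card_gt_0_iff Suc_le_eq)
        hence "(card (T - {a}) = m) = (card T = Suc m)" by auto
        thus "?F T (T - {a}) = (if card T = Suc m then Gh T else 0)" by simp
      qed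
      also have "\<dots> = (if card T = Suc m then of_nat (card (T - U)) * Gh T else 0)" by simp
      also have "\<dots> = (if card T = Suc m then (of_nat (Suc m) - of_nat (card U)) * Gh T else 0)"
      proof -
        have "card (T - U) = card T - card U" using T fU by (simp add: card_Diff_subset)
        moreover have "card U \<le> card T" using T fT card_mono by blast
        ultimately show ?thesis by (simp add: of_nat_diff)
      qed
      finally show "(\<Sum>a\<in>T - U. ?F T (T - {a})) = (if card T = Suc m then (of_nat (Suc m) - of_nat (card U)) * Gh T else 0)" .
    qed
    also have "\<dots> = (of_nat (Suc m) - of_nat (card U)) * (\<Sum>S\<in>{S. U \<subseteq> S \<and> S \<subseteq> x \<and> card S = Suc m}. Gh S)"
    proof -
      have fin2: "finite {T. U \<subseteq> T \<and> T \<subseteq> x}" by (rule finite_subset[of _ "Pow x"]) (auto simp: x_fin)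
      thus ?thesis by (simp add: sum.inter_filter[symmetric] sum_distrib_left conj_assoc)
    qed
    finally have R: "(\<Sum>T\<in>{T. U \<subseteq> T \<and> T \<subseteq> x}. \<Sum>a\<in>T - U. ?F T (T - {a})) = (of_nat (Suc m) - of_nat (card U)) * (\<Sum>S\<in>{S. U \<subseteq> S \<and> S \<subseteq> x \<and> card S = Suc m}. Gh S)" .
    have "card U \<noteq> Suc m" using False U by simp
    hence ne: "of_nat (Suc m) - of_nat (card U) \<noteq> (0::complex)" by (metis eq_iff_diff_eq_0 of_nat_eq_iff)
    show ?thesis using L R RI' ne by simp
  qed
qed

end

context harm
begin

definition Phi :: "(nat \<Rightarrow> complex) \<Rightarrow> nat set \<Rightarrow> complex" where
  "Phi c = (\<lambda>y. if y \<in> X then c (card (y \<inter> x)) * Gh (y \<inter> x) else 0)"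

definition Acoef :: "(nat \<Rightarrow> complex) \<Rightarrow> nat \<Rightarrow> complex" where
  "Acoef c m = c m * ((of_nat D - of_nat m + 1 - of_nat r) * (of_nat m - of_nat r) - of_nat m
                     + (of_nat D - of_nat m) * (of_nat N - 2 * of_nat D + of_nat m))
             + c (m - 1) * (of_nat N - 2 * of_nat D + of_nat m) * (of_nat m - of_nat r)
             + c (Suc m) * (of_nat D - of_nat m) * (of_nat D - of_nat m - of_nat r)"

lemma Phi_onX[simp]: "onX (Phi c)"
  by (simp add: onX_def Phi_def)

lemma T1:
  assumes S: "S \<subseteq> x" "card S = m"
  shows "(\<Sum>a\<in>S. \<Sum>b\<in>x - S. Gh (insert b (S - {a})))
       = ((of_nat D - of_nat m + 1 - of_nat r) * (of_nat m - of_nat r) - of_nat m) * Gh S"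
proof -
  have fS: "finite S" using S x_fin finite_subset by blast
  have "(\<Sum>a\<in>S. \<Sum>b\<in>x - S. Gh (insert b (S - {a}))) = (\<Sum>a\<in>S. (of_nat D - of_nat m + 1 - of_nat r) * Gh (S - {a}) - Gh S)"
  proof (rule sum.cong[OF refl])
    fix a assume a: "a \<in> S"
    have xa: "x - (S - {a}) = insert a (x - S)" using a S by auto
    have "(\<Sum>b\<in>x - (S - {a}). Gh (insert b (S - {a}))) = (of_nat D - of_nat (card (S - {a})) - of_nat r) * Gh (S - {a})"
      using S by (intro G2) auto
    moreover have "(\<Sum>b\<in>x - (S - {a}). Gh (insert b (S - {a}))) = Gh S + (\<Sum>b\<in>x - S. Gh (insert b (S - {a})))"
      unfolding xa using x_fin a by (simp add: insert_absorb)
    moreover have "0 < m" using a fS S(2) card_gt_0_iff by blast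
    moreover have "of_nat (card (S - {a})) = (of_nat m - 1 :: complex)"
      using a fS S \<open>0 < m\<close> by (simp add: of_nat_diff)
    ultimately show "(\<Sum>b\<in>x - S. Gh (insert b (S - {a}))) = (of_nat D - of_nat m + 1 - of_nat r) * Gh (S - {a}) - Gh S"
      by (simp add: algebra_simps)
  qed
  also have "\<dots> = (of_nat D - of_nat m + 1 - of_nat r) * (\<Sum>a\<in>S. Gh (S - {a})) - of_nat m * Gh S"
    using S by (simp add: sum_subtractf sum_distrib_left)
  also have "\<dots> = ((of_nat D - of_nat m + 1 - of_nat r) * (of_nat m - of_nat r) - of_nat m) * Gh S"
    by (simp only: G1[OF fS] S(2)) (simp add: algebra_simps)
  finally show ?thesis .
qed

lemma A_Phi_pt:
  assumes y: "y \<in> X"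
  shows "A (Phi c) y = Acoef c (card (y \<inter> x)) * Gh (y \<inter> x)"
proof -
  define S where "S = y \<inter> x"
  define m where "m = card S"
  have fy: "finite y" and yN: "y \<subseteq> {1..N}" and cy: "card y = D" using y X_iff X_fin by auto
  have Sx: "S \<subseteq> x" and fS: "finite S" using S_def fy by auto
  have cyx: "card (y - x) = D - m"
    using fy cy by (simp add: m_def S_def card_Diff_subset_Int)
  have mD: "m \<le> D" using m_def S_def fy cy card_mono[of y S] by auto
  have cR: "card ({1..N} - y - x) = N - (D + D - m)"
  proof -
    have "{1..N} - y - x = {1..N} - (y \<union> x)" by auto
    moreover have "card (y \<union> x) = D + D - m"
      using card_Un_Int[OF fy x_fin] cy x_card by (simp add: m_def S_def)
    moreover have "y \<union> x \<subseteq> {1..N}" using yN x_sub by auto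
    ultimately show ?thesis by (simp add: card_Diff_subset fy x_fin)
  qed
  have NR: "of_nat (N - (D + D - m)) = (of_nat N - 2 * of_nat D + of_nat m :: complex)"
    using DN mD by (simp add: of_nat_diff)
  have xy: "({1..N} - y) \<inter> x = x - S" using x_sub by (auto simp: S_def)
  let ?f = "\<lambda>a b. Phi c (insert b (y - {a}))"
  have "A (Phi c) y = (\<Sum>a\<in>y. \<Sum>b\<in>{1..N} - y. ?f a b)" using A_nb[OF y] by simp
  also have "\<dots> = (\<Sum>a\<in>y. (\<Sum>b\<in>x - S. ?f a b) + (\<Sum>b\<in>{1..N} - y - x. ?f a b))"
  proof (rule sum.cong[OF refl])
    fix a
    have "sum (?f a) ({1..N} - y) = sum (?f a) (({1..N} - y) \<inter> x) + sum (?f a) ({1..N} - y - x)"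
      by (rule sum.Int_Diff) simp
    thus "sum (?f a) ({1..N} - y) = (\<Sum>b\<in>x - S. ?f a b) + (\<Sum>b\<in>{1..N} - y - x. ?f a b)"
      by (simp only: xy)
  qed
  also have "\<dots> = (\<Sum>a\<in>S. (\<Sum>b\<in>x - S. ?f a b) + (\<Sum>b\<in>{1..N} - y - x. ?f a b))
                 + (\<Sum>a\<in>y - x. (\<Sum>b\<in>x - S. ?f a b) + (\<Sum>b\<in>{1..N} - y - x. ?f a b))"
    using fy by (simp add: sum.Int_Diff[of y _ x] S_def)
  also have "(\<Sum>a\<in>S. (\<Sum>b\<in>x - S. ?f a b) + (\<Sum>b\<in>{1..N} - y - x. ?f a b))
      = c m * (\<Sum>a\<in>S. \<Sum>b\<in>x - S. Gh (insert b (S - {a})))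
        + of_nat (N - (D + D - m)) * c (m - 1) * (\<Sum>a\<in>S. Gh (S - {a}))"
  proof -
    have e1: "\<And>a b. a \<in> S \<Longrightarrow> b \<in> x - S \<Longrightarrow> ?f a b = c m * Gh (insert b (S - {a}))"
    proof -
      fix a b assume a: "a \<in> S" and b: "b \<in> x - S"
      have "insert b (y - {a}) \<in> X" using ins_X[OF y] a b x_sub by (auto simp: S_def)
      moreover have "insert b (y - {a}) \<inter> x = insert b (S - {a})" using a b by (auto simp: S_def)
      moreover have "card (insert b (S - {a})) = m" using a b fS by (simp add: m_def card_gt_0_iff Suc_le_eq)
        (metis Suc_pred card_gt_0_iff empty_iff)
      ultimately show "?f a b = c m * Gh (insert b (S - {a}))" by (simp add: Phi_def)
    qed
    have e2: "\<And>a b. a \<in> S \<Longrightarrow> b \<in> {1..N} - y - x \<Longrightarrow> ?f a b = c (m - 1) * Gh (S - {a})"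
    proof -
      fix a b assume a: "a \<in> S" and b: "b \<in> {1..N} - y - x"
      have "insert b (y - {a}) \<in> X" using ins_X[OF y] a b by (auto simp: S_def)
      moreover have "insert b (y - {a}) \<inter> x = S - {a}" using a b by (auto simp: S_def)
      moreover have "card (S - {a}) = m - 1" using a fS by (simp add: m_def)
      ultimately show "?f a b = c (m - 1) * Gh (S - {a})" by (simp add: Phi_def)
    qed
    have "(\<Sum>a\<in>S. (\<Sum>b\<in>x - S. ?f a b) + (\<Sum>b\<in>{1..N} - y - x. ?f a b))
        = (\<Sum>a\<in>S. c m * (\<Sum>b\<in>x - S. Gh (insert b (S - {a}))) + of_nat (N - (D + D - m)) * c (m - 1) * Gh (S - {a}))"
      by (rule sum.cong[OF refl]) (simp add: e1 e2 sum_distrib_left cR[simplified])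
    thus ?thesis by (simp add: sum.distrib sum_distrib_left mult.assoc)
  qed
  also have "(\<Sum>a\<in>y - x. (\<Sum>b\<in>x - S. ?f a b) + (\<Sum>b\<in>{1..N} - y - x. ?f a b))
      = of_nat (D - m) * (c (Suc m) * (\<Sum>b\<in>x - S. Gh (insert b S)) + of_nat (N - (D + D - m)) * c m * Gh S)"
  proof -
    have e3: "\<And>a b. a \<in> y - x \<Longrightarrow> b \<in> x - S \<Longrightarrow> ?f a b = c (Suc m) * Gh (insert b S)"
    proof -
      fix a b assume a: "a \<in> y - x" and b: "b \<in> x - S"
      have "insert b (y - {a}) \<in> X" using ins_X[OF y] a b x_sub by (auto simp: S_def)
      moreover have "insert b (y - {a}) \<inter> x = insert b S" using a b by (auto simp: S_def)
      moreover have "card (insert b S) = Suc m" using b fS by (simp add: m_def)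
      ultimately show "?f a b = c (Suc m) * Gh (insert b S)" by (simp add: Phi_def)
    qed
    have e4: "\<And>a b. a \<in> y - x \<Longrightarrow> b \<in> {1..N} - y - x \<Longrightarrow> ?f a b = c m * Gh S"
    proof -
      fix a b assume a: "a \<in> y - x" and b: "b \<in> {1..N} - y - x"
      have "insert b (y - {a}) \<in> X" using ins_X[OF y] a b by auto
      moreover have "insert b (y - {a}) \<inter> x = S" using a b by (auto simp: S_def)
      ultimately show "?f a b = c m * Gh S" by (simp add: Phi_def m_def)
    qed
    have "(\<Sum>a\<in>y - x. (\<Sum>b\<in>x - S. ?f a b) + (\<Sum>b\<in>{1..N} - y - x. ?f a b))
        = (\<Sum>a\<in>y - x. c (Suc m) * (\<Sum>b\<in>x - S. Gh (insert b S)) + of_nat (N - (D + D - m)) * c m * Gh S)"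
      by (rule sum.cong[OF refl]) (simp add: e3 e4 sum_distrib_left cR[simplified])
    thus ?thesis using cyx by simp
  qed
  finally have "A (Phi c) y = c m * (\<Sum>a\<in>S. \<Sum>b\<in>x - S. Gh (insert b (S - {a})))
        + of_nat (N - (D + D - m)) * c (m - 1) * (\<Sum>a\<in>S. Gh (S - {a}))
        + of_nat (D - m) * (c (Suc m) * (\<Sum>b\<in>x - S. Gh (insert b S)) + of_nat (N - (D + D - m)) * c m * Gh S)" .
  also have "\<dots> = Acoef c m * Gh S"
    unfolding T1[OF Sx m_def[symmetric]] G1[OF fS] G2[OF Sx] NR
    using mD by (simp add: Acoef_def m_def[symmetric] of_nat_diff algebra_simps)
  finally show ?thesis by (simp add: S_def m_def)
qed

lemma A_Phi: "A (Phi c) = Phi (Acoef c)"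
proof
  fix y show "A (Phi c) y = Phi (Acoef c) y"
    by (cases "y \<in> X") (simp_all add: A_Phi_pt A_out Phi_def[of "Acoef c"])
qed

end

context harm
begin

fun prc :: "nat list \<Rightarrow> (nat \<Rightarrow> complex) \<Rightarrow> nat \<Rightarrow> complex" where
  "prc [] c = c"
| "prc (l # L) c = (\<lambda>m. Acoef (prc L c) m - th l * prc L c m)"

lemma op_Phi: "op l (Phi c) = Phi (\<lambda>m. Acoef c m - th l * c m)"
  unfolding op_def A_Phi by (simp add: Phi_def fun_eq_iff algebra_simps)

lemma pr_Phi: "pr L (Phi c) = Phi (prc L c)"
  by (induction L) (simp_all add: op_Phi)

lemma Phi_scale: "(\<lambda>y. k * Phi c y) = Phi (\<lambda>m. k * c m)"
  by (simp add: Phi_def fun_eq_iff)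

lemma E_Phi: "johnson_E N D j (Phi c) = Phi (\<lambda>m. Ec j [0..<Suc D] * prc (filter (\<lambda>l. l \<noteq> j) [0..<Suc D]) c m)"
  by (simp add: E_pr pr_Phi Phi_scale)

lemma wS_mult:
  assumes "S \<subseteq> {1..N}"
  shows "(\<lambda>y. of_nat (card (y \<inter> x)) * wS S y) = (\<lambda>y. \<Sum>p\<in>x. wS (insert p S) y)"
proof
  fix y
  show "of_nat (card (y \<inter> x)) * wS S y = (\<Sum>p\<in>x. wS (insert p S) y)"
  proof (cases "y \<in> X \<and> S \<subseteq> y")
    case True
    have "(\<Sum>p\<in>x. wS (insert p S) y) = (\<Sum>p\<in>x. if p \<in> y then 1 else 0)"
      using True by (intro sum.cong refl) (auto simp: wS_def)
    also have "\<dots> = of_nat (card {p \<in> x. p \<in> y})" using x_fin by (simp add: sum_ind)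
    also have "{p \<in> x. p \<in> y} = y \<inter> x" by auto
    finally show ?thesis using True by (simp add: wS_def)
  next
    case False
    thus ?thesis by (auto simp: wS_def intro!: sum.neutral)
  qed
qed

lemma LU_mult:
  assumes u: "u \<in> LU i"
  shows "(\<lambda>y. (of_nat (card (y \<inter> x)) - \<alpha>) * u y) \<in> LU (Suc i)"
proof -
  obtain f where uf: "u = (\<lambda>y. \<Sum>S\<in>SS i. f S * wS S y)" using u by (auto simp: LU_def)
  have e: "(\<lambda>y. (of_nat (card (y \<inter> x)) - \<alpha>) * u y) = (\<lambda>y. \<Sum>S\<in>SS i. f S * ((of_nat (card (y \<inter> x)) - \<alpha>) * wS S y))"
    unfolding uf by (simp add: sum_distrib_left algebra_simps)
  have "(\<lambda>y. \<Sum>S\<in>SS i. f S * ((of_nat (card (y \<inter> x)) - \<alpha>) * wS S y)) \<in> LU (Suc i)"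
  proof (rule LU_sum[OF finite_SS], rule LU_scale)
    fix S assume S: "S \<in> SS i"
    hence SN: "S \<subseteq> {1..N}" and Si: "card S < i" by (auto simp: SS_def)
    have fS: "finite S" using SN finite_subset by blast
    have e2: "(\<lambda>y. (of_nat (card (y \<inter> x)) - \<alpha>) * wS S y) = (\<lambda>y. (\<Sum>p\<in>x. wS (insert p S) y) - \<alpha> * wS S y)"
      using fun_cong[OF wS_mult[OF SN]] by (simp add: fun_eq_iff algebra_simps)
    have "(\<lambda>y. \<Sum>p\<in>x. wS (insert p S) y) \<in> LU (Suc i)"
    proof (rule LU_sum[OF x_fin])
      fix p assume "p \<in> x"
      hence "insert p S \<subseteq> {1..N}" using SN x_sub by auto
      moreover have "card (insert p S) < Suc i" using Si fS by (simp add: card_insert_if)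
      ultimately show "wS (insert p S) \<in> LU (Suc i)" by (rule LU_wS)
    qed
    moreover have "(\<lambda>y. \<alpha> * wS S y) \<in> LU (Suc i)" using SN Si by (intro LU_scale LU_wS) auto
    ultimately show "(\<lambda>y. (of_nat (card (y \<inter> x)) - \<alpha>) * wS S y) \<in> LU (Suc i)"
      unfolding e2 by (rule LU_diff)
  qed
  thus ?thesis using e by simp
qed

lemma LU_prod:
  assumes K: "finite K" and u: "u \<in> LU i"
  shows "(\<lambda>y. (\<Prod>k\<in>K. (of_nat (card (y \<inter> x)) - of_nat k) / (of_nat m0 - of_nat k)) * u y) \<in> LU (i + card K)"
  using K
proof (induction K rule: finite_induct)
  case empty thus ?case using u by simp
next
  case (insert k K)
  have "(\<lambda>y. (\<Prod>k\<in>insert k K. (of_nat (card (y \<inter> x)) - of_nat k) / (of_nat m0 - of_nat k)) * u y)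
      = (\<lambda>y. (1 / (of_nat m0 - of_nat k)) * ((of_nat (card (y \<inter> x)) - of_nat k) *
            ((\<Prod>k\<in>K. (of_nat (card (y \<inter> x)) - of_nat k) / (of_nat m0 - of_nat k)) * u y)))"
    using insert by (simp add: fun_eq_iff)
  moreover have "\<dots> \<in> LU (Suc (i + card K))"
    by (rule LU_scale, rule LU_mult, rule insert.IH)
  ultimately show ?case using insert by simp
qed

lemma Phi1_LU: "Phi (\<lambda>_. 1) \<in> LU (Suc r)"
proof -
  have "Phi (\<lambda>_. 1) = (\<lambda>y. \<Sum>T\<in>LL r. h T * wS T y)"
  proof
    fix y
    show "Phi (\<lambda>_. 1) y = (\<Sum>T\<in>LL r. h T * wS T y)"
    proof (cases "y \<in> X")
      case True
      have "Gh (y \<inter> x) = (\<Sum>T\<in>{T \<in> Pow x. T \<subseteq> y}. h T)"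
        unfolding Gh_def by (rule sum.cong) auto
      also have "\<dots> = (\<Sum>T\<in>Pow x. if T \<subseteq> y then h T else 0)"
        by (rule sum.inter_filter) (simp add: x_fin)
      also have "\<dots> = (\<Sum>T\<in>LL r. if T \<subseteq> y then h T else 0)"
        by (rule sum.mono_neutral_right) (auto simp: x_fin LL_def dest: h_supp)
      also have "\<dots> = (\<Sum>T\<in>LL r. h T * wS T y)"
        using True by (intro sum.cong refl) (simp add: wS_def)
      finally show ?thesis using True by (simp add: Phi_def)
    qed (simp add: Phi_def wS_def)
  qed
  moreover have "(\<lambda>y. \<Sum>T\<in>LL r. h T * wS T y) \<in> LU (Suc r)"
    by (rule LU_sum[OF finite_LL], rule LU_scale, rule LU_wS) (use x_sub in \<open>auto simp: LL_def\<close>)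
  ultimately show ?thesis by simp
qed

lemma Gh_out: "S \<subseteq> x \<Longrightarrow> card S \<notin> {r..D - r} \<Longrightarrow> Gh S = 0"
  using Gh_small Gh_vanish x_fin finite_subset by (metis atLeastAtMost_iff not_le)

lemma Phi_delta:
  assumes m0: "m0 \<in> {r..D - r}"
  shows "Phi (\<lambda>m. if m = m0 then 1 else 0)
       = (\<lambda>y. (\<Prod>k\<in>{r..D - r} - {m0}. (of_nat (card (y \<inter> x)) - of_nat k) / (of_nat m0 - of_nat k)) * Phi (\<lambda>_. 1) y)"
proof
  fix y
  show "Phi (\<lambda>m. if m = m0 then 1 else 0) y = (\<Prod>k\<in>{r..D - r} - {m0}. (of_nat (card (y \<inter> x)) - of_nat k) / (of_nat m0 - of_nat k)) * Phi (\<lambda>_. 1) y"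
  proof (cases "y \<in> X")
    case False thus ?thesis by (simp add: Phi_def)
  next
    case True
    show ?thesis
    proof (cases "card (y \<inter> x) \<in> {r..D - r}")
      case False thus ?thesis using True Gh_out[of "y \<inter> x"] by (simp add: Phi_def)
    next
      case inr: True
      show ?thesis
      proof (cases "card (y \<inter> x) = m0")
        case True
        have "(\<Prod>k\<in>{r..D - r} - {m0}. (of_nat (card (y \<inter> x)) - of_nat k) / (of_nat m0 - of_nat k)) = (1::complex)"
          using True by (intro prod.neutral) auto
        thus ?thesis using True \<open>y \<in> X\<close> by (simp add: Phi_def)
      next
        case False
        have "(\<Prod>k\<in>{r..D - r} - {m0}. (of_nat (card (y \<inter> x)) - of_nat k) / (of_nat m0 - of_nat k)) = (0::complex)"
          using False inr by (subst prod_zero_iff) auto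
        thus ?thesis using False \<open>y \<in> X\<close> by (simp add: Phi_def)
      qed
    qed
  qed
qed

lemma Phi_LU: "Phi c \<in> LU (Suc (D - r))"
proof (cases "D < 2 * r")
  case True
  have "Phi c = (\<lambda>y. 0)"
  proof
    fix y show "Phi c y = 0"
      using Gh_out[of "y \<inter> x"] True by (auto simp: Phi_def)
  qed
  thus ?thesis using LU_zero by simp
next
  case False
  have dec: "Phi c = (\<lambda>y. \<Sum>m0\<in>{r..D - r}. c m0 * Phi (\<lambda>m. if m = m0 then 1 else 0) y)"
  proof
    fix y
    show "Phi c y = (\<Sum>m0\<in>{r..D - r}. c m0 * Phi (\<lambda>m. if m = m0 then 1 else 0) y)"
    proof (cases "y \<in> X \<and> card (y \<inter> x) \<in> {r..D - r}")
      case True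
      have "(\<Sum>m0\<in>{r..D - r}. c m0 * Phi (\<lambda>m. if m = m0 then 1 else 0) y) = (\<Sum>m0\<in>{r..D - r}. if card (y \<inter> x) = m0 then c m0 * Gh (y \<inter> x) else 0)"
        using True by (intro sum.cong refl) (simp add: Phi_def)
      also have "\<dots> = c (card (y \<inter> x)) * Gh (y \<inter> x)" using True by (simp add: sum.delta)
      finally show ?thesis using True by (simp add: Phi_def)
    next
      case False
      thus ?thesis using Gh_out[of "y \<inter> x"] by (auto simp: Phi_def)
    qed
  qed
  have "(\<lambda>y. \<Sum>m0\<in>{r..D - r}. c m0 * Phi (\<lambda>m. if m = m0 then 1 else 0) y) \<in> LU (Suc (D - r))"
  proof (rule LU_sum, simp, rule LU_scale)
    fix m0 assume m0: "m0 \<in> {r..D - r}"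
    have "card ({r..D - r} - {m0}) = D - 2 * r" using m0 False by simp
    moreover have "Suc r + (D - 2 * r) = Suc (D - r)" using False by simp
    ultimately show "Phi (\<lambda>m. if m = m0 then 1 else 0) \<in> LU (Suc (D - r))"
      unfolding Phi_delta[OF m0] using LU_prod[OF _ Phi1_LU, of "{r..D - r} - {m0}" m0] by simp
  qed
  thus ?thesis using dec by simp
qed

end

context jsetup
begin

definition ZZ :: "nat \<Rightarrow> nat set set" where
  "ZZ k = {Z. Z \<subseteq> {1..N} - x \<and> card Z = D - k}"

lemma finite_ZZ: "finite (ZZ k)"
  by (rule finite_subset[of _ "Pow {1..N}"]) (auto simp: ZZ_def)

lemma ZZ_fin: "Z \<in> ZZ k \<Longrightarrow> finite Z"
  by (rule finite_subset[of Z "{1..N}"]) (auto simp: ZZ_def)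

lemma ZZ_out: "Z \<in> ZZ k \<Longrightarrow> p \<in> Z \<Longrightarrow> p \<notin> x"
  by (auto simp: ZZ_def)

lemma union_props:
  assumes S': "S' \<subseteq> x" and Z: "Z \<in> ZZ (card S')"
  shows "S' \<union> Z \<in> X" "(S' \<union> Z) \<inter> x = S'" "(S' \<union> Z) - x = Z"
proof -
  have fZ: "finite Z" using ZZ_fin[OF Z] .
  have fS': "finite S'" using S' x_fin finite_subset by auto
  have "card S' \<le> D" using card_mono[OF x_fin S'] x_card by simp
  moreover have "card (S' \<union> Z) = card S' + card Z"
    using S' Z fS' fZ by (intro card_Un_disjoint) (auto simp: ZZ_def)
  ultimately have "card (S' \<union> Z) = D" using Z by (simp add: ZZ_def)
  moreover have "S' \<union> Z \<subseteq> {1..N}" using S' Z x_sub by (auto simp: ZZ_def)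
  ultimately show "S' \<union> Z \<in> X" by (simp add: X_iff)
  show "(S' \<union> Z) \<inter> x = S'" "(S' \<union> Z) - x = Z" using S' Z by (auto simp: ZZ_def)
qed

lemma split_props:
  assumes y: "y \<in> X" shows "y - x \<in> ZZ (card (y \<inter> x))"
proof -
  have fy: "finite y" and cy: "card y = D" and yN: "y \<subseteq> {1..N}" using y X_iff X_fin by auto
  have "card (y - x) = D - card (y \<inter> x)" using fy cy by (simp add: card_Diff_subset_Int)
  thus ?thesis using yN by (auto simp: ZZ_def)
qed

lemma DEC: "(\<Sum>y\<in>X. f y) = (\<Sum>S'\<in>Pow x. \<Sum>Z\<in>ZZ (card S'). f (S' \<union> Z))"
proof -
  have "(\<Sum>S'\<in>Pow x. \<Sum>Z\<in>ZZ (card S'). f (S' \<union> Z)) = (\<Sum>(S',Z)\<in>Sigma (Pow x) (\<lambda>S'. ZZ (card S')). f (S' \<union> Z))"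
    by (subst sum.Sigma) (auto simp: x_fin finite_ZZ)
  also have "\<dots> = (\<Sum>y\<in>X. f y)"
    by (rule sum.reindex_bij_witness[where i="\<lambda>y. (y \<inter> x, y - x)" and j="\<lambda>(S',Z). S' \<union> Z"])
       (auto simp: union_props split_props dest: ZZ_out)
  finally show ?thesis by simp
qed

lemma group_card:
  "(\<Sum>S'\<in>Pow x. g S') = (\<Sum>k\<in>{..D}. \<Sum>S'\<in>{S'. S' \<subseteq> x \<and> card S' = k}. g S')"
proof -
  have "(\<Sum>S'\<in>Pow x. g S') = (\<Sum>S'\<in>Pow x. \<Sum>k\<in>{..D}. if card S' = k then g S' else 0)"
  proof (rule sum.cong[OF refl])
    fix S' assume "S' \<in> Pow x"
    hence "card S' \<le> D" using card_mono[OF x_fin] x_card by auto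
    thus "g S' = (\<Sum>k\<in>{..D}. if card S' = k then g S' else 0)" by (simp add: sum.delta)
  qed
  also have "\<dots> = (\<Sum>k\<in>{..D}. \<Sum>S'\<in>Pow x. if card S' = k then g S' else 0)" by (rule sum.swap)
  also have "\<dots> = (\<Sum>k\<in>{..D}. \<Sum>S'\<in>{S'. S' \<subseteq> x \<and> card S' = k}. g S')"
  proof (rule sum.cong[OF refl])
    fix k
    have "{S' \<in> Pow x. card S' = k} = {S'. S' \<subseteq> x \<and> card S' = k}" by auto
    thus "(\<Sum>S'\<in>Pow x. if card S' = k then g S' else 0) = (\<Sum>S'\<in>{S'. S' \<subseteq> x \<and> card S' = k}. g S')"
      using sum.inter_filter[of "Pow x" g "\<lambda>S'. card S' = k", symmetric] x_fin by simp
  qed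
  finally show ?thesis .
qed

lemma ip_sum2: "ip v (\<lambda>y. \<Sum>k\<in>I. g k y) = (\<Sum>k\<in>I. ip v (g k))"
  unfolding ip_def by (simp add: sum_distrib_left cnj_sum) (rule sum.swap)

end

context harm
begin

lemma Phi_wS:
  assumes S: "S \<subseteq> {1..N}" "card S < r"
  shows "ip (Phi c) (wS S) = 0"
proof -
  have fS: "finite S" using S finite_subset by blast
  define U where "U = S \<inter> x"
  have U: "U \<subseteq> x" "card U < r" using S fS card_mono[of S U] by (auto simp: U_def)
  define cnt where "cnt k = card {Z \<in> ZZ k. S - x \<subseteq> Z}" for k
  have "ip (Phi c) (wS S) = (\<Sum>y\<in>X. Phi c y * cnj (wS S y))" by (simp add: ip_def)
  also have "\<dots> = (\<Sum>S'\<in>Pow x. \<Sum>Z\<in>ZZ (card S'). Phi c (S' \<union> Z) * cnj (wS S (S' \<union> Z)))"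
    by (rule DEC)
  also have "\<dots> = (\<Sum>S'\<in>Pow x. if U \<subseteq> S' then of_nat (cnt (card S')) * c (card S') * Gh S' else 0)"
  proof (rule sum.cong[OF refl])
    fix S' assume S': "S' \<in> Pow x"
    have "(\<Sum>Z\<in>ZZ (card S'). Phi c (S' \<union> Z) * cnj (wS S (S' \<union> Z)))
        = (\<Sum>Z\<in>ZZ (card S'). if U \<subseteq> S' \<and> S - x \<subseteq> Z then c (card S') * Gh S' else 0)"
    proof (rule sum.cong[OF refl])
      fix Z assume Z: "Z \<in> ZZ (card S')"
      have fZ: "finite Z" using ZZ_fin[OF Z] .
      have fS': "finite S'" using S' x_fin finite_subset by auto
      have "card S' \<le> D" using card_mono[OF x_fin] S' x_card by auto
      moreover have "card (S' \<union> Z) = card S' + card Z"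
        using S' Z fS' fZ by (intro card_Un_disjoint) (auto simp: ZZ_def)
      ultimately have "card (S' \<union> Z) = D" using Z by (simp add: ZZ_def)
      moreover have "S' \<union> Z \<subseteq> {1..N}" using S' Z x_sub by (auto simp: ZZ_def)
      ultimately have inX: "S' \<union> Z \<in> X" by (simp add: X_iff)
      have ix: "(S' \<union> Z) \<inter> x = S'" using S' Z by (auto simp: ZZ_def)
      have "(S \<subseteq> S' \<union> Z) = (U \<subseteq> S' \<and> S - x \<subseteq> Z)" using S' Z by (auto simp: U_def ZZ_def)
      thus "Phi c (S' \<union> Z) * cnj (wS S (S' \<union> Z)) = (if U \<subseteq> S' \<and> S - x \<subseteq> Z then c (card S') * Gh S' else 0)"
        using inX ix by (simp add: Phi_def wS_def)
    qed
    also have "\<dots> = (if U \<subseteq> S' then of_nat (cnt (card S')) * c (card S') * Gh S' else 0)"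
      using finite_ZZ by (simp add: sum_ind cnt_def)
    finally show "(\<Sum>Z\<in>ZZ (card S'). Phi c (S' \<union> Z) * cnj (wS S (S' \<union> Z))) = (if U \<subseteq> S' then of_nat (cnt (card S')) * c (card S') * Gh S' else 0)" .
  qed
  also have "\<dots> = (\<Sum>k\<in>{..D}. \<Sum>S'\<in>{S'. S' \<subseteq> x \<and> card S' = k}. if U \<subseteq> S' then of_nat (cnt (card S')) * c (card S') * Gh S' else 0)"
    by (rule group_card)
  also have "\<dots> = (\<Sum>k\<in>{..D}. of_nat (cnt k) * c k * (\<Sum>S'\<in>{S'. U \<subseteq> S' \<and> S' \<subseteq> x \<and> card S' = k}. Gh S'))"
  proof (rule sum.cong[OF refl])
    fix k
    have fin: "finite {S'. S' \<subseteq> x \<and> card S' = k}" by (rule finite_subset[of _ "Pow x"]) (auto simp: x_fin)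
    have "(\<Sum>S'\<in>{S'. S' \<subseteq> x \<and> card S' = k}. if U \<subseteq> S' then of_nat (cnt (card S')) * c (card S') * Gh S' else 0)
        = (\<Sum>S'\<in>{S'. S' \<subseteq> x \<and> card S' = k}. if U \<subseteq> S' then of_nat (cnt k) * c k * Gh S' else 0)"
      by (rule sum.cong) auto
    also have "\<dots> = (\<Sum>S'\<in>{S' \<in> {S'. S' \<subseteq> x \<and> card S' = k}. U \<subseteq> S'}. of_nat (cnt k) * c k * Gh S')"
      by (rule sum.inter_filter[symmetric, OF fin])
    also have "{S' \<in> {S'. S' \<subseteq> x \<and> card S' = k}. U \<subseteq> S'} = {S'. U \<subseteq> S' \<and> S' \<subseteq> x \<and> card S' = k}" by auto
    finally show "(\<Sum>S'\<in>{S'. S' \<subseteq> x \<and> card S' = k}. if U \<subseteq> S' then of_nat (cnt (card S')) * c (card S') * Gh S' else 0)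
        = of_nat (cnt k) * c k * (\<Sum>S'\<in>{S'. U \<subseteq> S' \<and> S' \<subseteq> x \<and> card S' = k}. Gh S')"
      by (simp add: sum_distrib_left)
  qed
  also have "\<dots> = 0" using FU[OF U] by simp
  finally show ?thesis .
qed

lemma Phi_perp: "\<forall>u\<in>LU r. ip (Phi c) u = 0"
proof
  fix u assume "u \<in> LU r"
  then obtain f where u: "u = (\<lambda>y. \<Sum>S\<in>SS r. f S * wS S y)" by (auto simp: LU_def)
  have "ip (Phi c) u = (\<Sum>S\<in>SS r. ip (Phi c) (\<lambda>y. f S * wS S y))" unfolding u by (rule ip_sum2)
  also have "\<dots> = (\<Sum>S\<in>SS r. cnj (f S) * ip (Phi c) (wS S))" by (simp add: ip_scale2)
  also have "\<dots> = 0" by (rule sum.neutral) (auto simp: SS_def Phi_wS)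
  finally show "ip (Phi c) u = 0" .
qed

end

context jsetup
begin

lemma E_pr_comm: "johnson_E N D l (pr L u) = pr L (johnson_E N D l u)"
proof -
  have "pr (filter (\<lambda>l'. l' \<noteq> l) [0..<Suc D]) (pr L u) = pr L (pr (filter (\<lambda>l'. l' \<noteq> l) [0..<Suc D]) u)"
    by (rule pr_comm)
  thus ?thesis by (simp add: E_pr pr_scale)
qed

end

context harm
begin

lemma LOW:
  assumes c0: "\<forall>m>m0. c m = 0" and c1: "c m0 \<noteq> 0" and rm: "r \<le> m0"
  shows "m0 + length L \<le> D - r \<Longrightarrow> (\<forall>m > m0 + length L. prc L c m = 0) \<and> prc L c (m0 + length L) \<noteq> 0"
proof (induction L)
  case Nil thus ?case using c0 c1 by simp
next
  case (Cons l L)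
  define d where "d = prc L c"
  define m1 where "m1 = m0 + length L"
  have pre: "m0 + length L \<le> D - r" using Cons.prems by simp
  have "(\<forall>m > m1. d m = 0) \<and> d m1 \<noteq> 0" unfolding d_def m1_def by (rule Cons.IH[OF pre])
  hence IH: "\<forall>m > m1. d m = 0" "d m1 \<noteq> 0" by blast+
  have m1r: "r \<le> m1" using rm by (simp add: m1_def)
  have pe: "\<And>m. prc (l # L) c m = Acoef d m - th l * d m" by (simp add: d_def)
  have big: "\<forall>m > Suc m1. prc (l # L) c m = 0"
  proof (intro allI impI)
    fix m assume "Suc m1 < m"
    hence "d m = 0" "d (m - 1) = 0" "d (Suc m) = 0" using IH by auto
    thus "prc (l # L) c m = 0" unfolding pe Acoef_def by simp
  qed
  have "prc (l # L) c (Suc m1) = d m1 * (of_nat N - 2 * of_nat D + of_nat (Suc m1)) * (of_nat (Suc m1) - of_nat r)"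
    unfolding pe Acoef_def using IH by simp
  moreover have "(of_nat N - 2 * of_nat D + of_nat (Suc m1) :: complex) = of_nat (N - 2 * D + Suc m1)"
    using DN by (simp add: of_nat_diff)
  moreover have "(of_nat (Suc m1) - of_nat r :: complex) = of_nat (Suc m1 - r)"
    using m1r by (simp add: of_nat_diff)
  moreover have "N - 2 * D + Suc m1 \<noteq> 0" "Suc m1 - r \<noteq> 0" using m1r by auto
  ultimately have "prc (l # L) c (Suc m1) \<noteq> 0" using IH(2) by (simp only: mult_eq_0_iff of_nat_eq_0_iff) simp
  thus ?case using big by (simp add: m1_def)
qed

definition dl :: "nat \<Rightarrow> nat \<Rightarrow> complex" where
  "dl m = (\<lambda>k. if k = m then 1 else 0)"

lemma Phi_expand: "Phi c = (\<lambda>y. \<Sum>m\<in>{..D}. c m * Phi (dl m) y)"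
proof
  fix y
  show "Phi c y = (\<Sum>m\<in>{..D}. c m * Phi (dl m) y)"
  proof (cases "y \<in> X")
    case True
    have "card (y \<inter> x) \<le> D" using card_mono[OF x_fin, of "y \<inter> x"] x_card by auto
    have "(\<Sum>m\<in>{..D}. c m * Phi (dl m) y) = (\<Sum>m\<in>{..D}. if card (y \<inter> x) = m then c m * Gh (y \<inter> x) else 0)"
      using True by (intro sum.cong refl) (simp add: Phi_def dl_def)
    also have "\<dots> = c (card (y \<inter> x)) * Gh (y \<inter> x)" using \<open>card (y \<inter> x) \<le> D\<close> by (simp add: sum.delta)
    finally show ?thesis using True by (simp add: Phi_def)
  qed (simp add: Phi_def)
qed

lemma ip_Phi_expand: "ip w (Phi c) = (\<Sum>m\<in>{..D}. cnj (c m) * ip w (Phi (dl m)))"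
  by (subst Phi_expand) (simp add: ip_sum2 ip_scale2)

lemma ip_Phi_dl: "ip (Phi c) (Phi (dl m)) = c m * ip (Phi (dl m)) (Phi (dl m))"
  unfolding ip_def sum_distrib_left by (rule sum.cong[OF refl]) (simp add: Phi_def dl_def)

lemma Phi_zero_coef: "(\<And>m. c m = 0) \<Longrightarrow> Phi c = (\<lambda>y. 0)"
  by (simp add: Phi_def fun_eq_iff)

end

locale mainloc = harm +
  fixes Y :: "nat set set"
  assumes YX: "Y \<subseteq> X" and cY: "1 < card Y"
begin

abbreviation "chi \<equiv> char_vec Y"

definition aa :: "nat \<Rightarrow> complex" where "aa m = ip chi (Phi (dl m))"
definition nn :: "nat \<Rightarrow> complex" where "nn m = ip (Phi (dl m)) (Phi (dl m))"
definition coef :: "nat \<Rightarrow> complex" where "coef m = aa m / nn m"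
definition vv where "vv = Phi coef"

lemma chi_onX: "onX chi"
  using YX by (auto simp: onX_def char_vec_def)

lemma aa_eq: "aa m = coef m * nn m"
proof (cases "nn m = 0")
  case True
  hence "Phi (dl m) = (\<lambda>y. 0)" using ip_self_zero[of "Phi (dl m)"] by (simp add: nn_def)
  hence "aa m = 0" by (simp add: aa_def ip_zero2)
  thus ?thesis using True by simp
qed (simp add: coef_def)

lemma vv_ip: "ip vv (Phi (dl m)) = aa m"
  unfolding vv_def by (subst ip_Phi_dl) (simp add: aa_eq nn_def)

lemma perp_diff: "ip (\<lambda>y. chi y - vv y) (Phi c) = 0"
  by (subst ip_Phi_expand) (simp add: ip_diff1 vv_ip aa_def)

lemma transfer_E:
  assumes "johnson_E N D j chi = (\<lambda>y. 0)"
  shows "johnson_E N D j vv = (\<lambda>y. 0)"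
proof -
  let ?w = "johnson_E N D j vv"
  have e1: "johnson_E N D j (\<lambda>y. chi y - vv y) = (\<lambda>y. (-1) * ?w y)"
    using assms by (simp add: E_diff)
  obtain c' where wc: "johnson_E N D j ?w = Phi c'" unfolding vv_def E_Phi by blast
  have "ip (johnson_E N D j (\<lambda>y. chi y - vv y)) ?w = ip (\<lambda>y. chi y - vv y) (johnson_E N D j ?w)"
    by (rule E_sa)
  also have "\<dots> = 0" unfolding wc by (rule perp_diff)
  finally have "ip (\<lambda>y. (-1) * ?w y) ?w = 0" using e1 by simp
  hence "(-1) * ip ?w ?w = 0" by (simp only: ip_scale1)
  hence "ip ?w ?w = 0" by simp
  thus ?thesis by (rule ip_self_zero[OF E_onX])
qed

lemma coef_nz: "coef m \<noteq> 0 \<Longrightarrow> aa m \<noteq> 0 \<and> nn m \<noteq> 0"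
  by (auto simp: coef_def)

lemma aa_nz: assumes "aa m \<noteq> 0" shows "\<exists>y\<in>Y. card (x \<inter> y) = m"
proof (rule ccontr)
  assume "\<not> (\<exists>y\<in>Y. card (x \<inter> y) = m)"
  hence "\<forall>y\<in>X. chi y * cnj (Phi (dl m) y) = 0"
    by (auto simp: char_vec_def Phi_def dl_def Int_commute)
  hence "aa m = 0" unfolding aa_def ip_def by (intro sum.neutral) blast
  thus False using assms by simp
qed

lemma nn_nz: assumes "nn m \<noteq> 0" shows "r \<le> m \<and> m \<le> D - r"
proof (rule ccontr)
  assume a: "\<not> (r \<le> m \<and> m \<le> D - r)"
  have "Phi (dl m) = (\<lambda>y. 0)"
  proof
    fix y show "Phi (dl m) y = 0"
      using a Gh_out[of "y \<inter> x"] by (auto simp: Phi_def dl_def)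
  qed
  hence "nn m = 0" by (simp add: nn_def ip_zero2)
  thus False using assms by simp
qed

lemma coef_range: "coef m \<noteq> 0 \<Longrightarrow> r \<le> m \<and> m \<le> D - r"
  using coef_nz nn_nz by blast

lemma Ev_small: "j < r \<Longrightarrow> j \<le> D \<Longrightarrow> johnson_E N D j vv = (\<lambda>y. 0)"
  using perp_E[OF Phi_perp[of coef]] by (simp add: vv_def)

lemma Ev_big: "D - r < j \<Longrightarrow> johnson_E N D j vv = (\<lambda>y. 0)"
  by (rule E_kill[OF Phi_LU[of coef, folded vv_def]]) auto

lemma Estar_iff: "johnson_Estar N D x i chi \<noteq> (\<lambda>_. 0) \<longleftrightarrow> (\<exists>y\<in>Y. card (x \<inter> y) = D - i)"
  using YX by (auto simp: johnson_Estar_def char_vec_def fun_eq_iff)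

lemma vv_zero_aa: "vv = (\<lambda>y. 0) \<Longrightarrow> aa m = 0"
  using vv_ip[of m] by (simp add: ip_zero1)

end

context mainloc
begin

lemma ex_coef: "vv \<noteq> (\<lambda>y. 0) \<Longrightarrow> \<exists>m. coef m \<noteq> 0"
  using Phi_zero_coef[of coef] by (auto simp: vv_def)

lemma finite_M: "finite {m. coef m \<noteq> 0}"
  by (rule finite_subset[of _ "{r..D - r}"]) (auto dest: coef_range)

lemma pvals:
  assumes m0: "m0 \<in> K \<union> {m0}" and fK: "finite K" and nK: "m0 \<notin> K"
  shows "(\<Prod>k\<in>K. (of_nat m0 - of_nat k) / (of_nat m0 - of_nat k)) = (1::complex)"
    and "\<And>m. m \<in> K \<Longrightarrow> (\<Prod>k\<in>K. (of_nat m - of_nat k) / (of_nat m0 - of_nat k)) = (0::complex)"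
proof -
  show "(\<Prod>k\<in>K. (of_nat m0 - of_nat k) / (of_nat m0 - of_nat k)) = (1::complex)"
    using nK by (intro prod.neutral) auto
  fix m assume "m \<in> K"
  thus "(\<Prod>k\<in>K. (of_nat m - of_nat k) / (of_nat m0 - of_nat k)) = (0::complex)"
    using fK by (subst prod_zero_iff) auto
qed

lemma main_B:
  assumes B: "int (card {i. r \<le> i \<and> i \<le> D - r \<and> johnson_Estar N D x i chi \<noteq> (\<lambda>_. 0)})
              \<le> int (delta_star N D chi) - int r"
  shows "vv = (\<lambda>y. 0)"
proof (rule ccontr)
  assume nz: "vv \<noteq> (\<lambda>y. 0)"
  define M' where "M' = {m. coef m \<noteq> 0}"
  define Kset where "Kset = {i. r \<le> i \<and> i \<le> D - r \<and> johnson_Estar N D x i chi \<noteq> (\<lambda>_. 0)}"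
  have fM: "finite M'" using finite_M by (simp add: M'_def)
  obtain m0 where m0: "coef m0 \<noteq> 0" using ex_coef[OF nz] by blast
  have m0M: "m0 \<in> M'" using m0 by (simp add: M'_def)
  have img: "(\<lambda>m. D - m) ` M' \<subseteq> Kset"
  proof
    fix i assume "i \<in> (\<lambda>m. D - m) ` M'"
    then obtain m where m: "m \<in> M'" "i = D - m" by blast
    have cm: "coef m \<noteq> 0" using m by (simp add: M'_def)
    have rng: "r \<le> m \<and> m \<le> D - r" by (rule coef_range[OF cm])
    obtain y where y: "y \<in> Y" "card (x \<inter> y) = m" using aa_nz coef_nz[OF cm] by blast
    have "m \<le> D" using rng by arith
    hence "card (x \<inter> y) = D - i" using y m by simp
    hence "johnson_Estar N D x i chi \<noteq> (\<lambda>_. 0)" using Estar_iff y by blast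
    thus "i \<in> Kset" using m rng by (auto simp: Kset_def)
  qed
  have inj: "inj_on (\<lambda>m. D - m) M'"
  proof (rule inj_onI)
    fix a b assume "a \<in> M'" "b \<in> M'" "D - a = D - b"
    moreover have "a \<le> D" "b \<le> D" using coef_range \<open>a \<in> M'\<close> \<open>b \<in> M'\<close> by (force simp: M'_def)+
    ultimately show "a = b" by arith
  qed
  have fK: "finite Kset" by (rule finite_subset[of _ "{..D}"]) (auto simp: Kset_def)
  have cM: "card M' \<le> card Kset" using card_inj_on_le[OF inj img fK] .
  show False
  proof (cases "\<exists>j. j \<noteq> 0 \<and> j \<le> D \<and> johnson_E N D j chi \<noteq> (\<lambda>_. 0)")
    case False
    have "vv = (\<lambda>y. 0)"
    proof (rule all_E_zero)
      show "onX vv" by (simp add: vv_def)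
      fix l assume l: "l \<le> D"
      show "johnson_E N D l vv = (\<lambda>y. 0)"
      proof (cases "l = 0")
        case True thus ?thesis using Ev_small[of l] r1 l by simp
      next
        case False2: False
        hence "johnson_E N D l chi = (\<lambda>_. 0)" using False l by blast
        thus ?thesis by (rule transfer_E)
      qed
    qed
    thus False using nz by simp
  next
    case True
    define ds where "ds = delta_star N D chi"
    have dsP: "ds \<noteq> 0 \<and> ds \<le> D \<and> johnson_E N D ds chi \<noteq> (\<lambda>_. 0)"
      unfolding ds_def delta_star_def by (rule LeastI_ex) (rule True)
    have below: "\<And>j. j < ds \<Longrightarrow> j \<noteq> 0 \<Longrightarrow> johnson_E N D j chi = (\<lambda>_. 0)"
    proof -
      fix j assume "j < ds" "j \<noteq> 0"
      from \<open>j < ds\<close> have "\<not> (j \<noteq> 0 \<and> j \<le> D \<and> johnson_E N D j chi \<noteq> (\<lambda>_. 0))"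
        unfolding ds_def delta_star_def by (rule not_less_Least)
      thus "johnson_E N D j chi = (\<lambda>_. 0)" using \<open>j \<noteq> 0\<close> \<open>j < ds\<close> dsP by auto
    qed
    have Ev0: "\<And>j. j < ds \<Longrightarrow> johnson_E N D j vv = (\<lambda>y. 0)"
    proof -
      fix j assume j: "j < ds"
      show "johnson_E N D j vv = (\<lambda>y. 0)"
      proof (cases "j = 0")
        case True thus ?thesis using Ev_small[of j] r1 by simp
      next
        case False thus ?thesis using below[OF j False] transfer_E by blast
      qed
    qed
    have perp: "\<forall>u\<in>LU ds. ip vv u = 0" by (rule perp_LU) (use Ev0 dsP in auto)
    have cds: "card M' + r \<le> ds" using cM B by (simp add: Kset_def ds_def)
    define K where "K = M' - {m0}"
    have fK': "finite K" using fM by (simp add: K_def)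
    have "card M' > 0" using m0M fM card_gt_0_iff by blast
    hence cK: "card K + 1 = card M'" using m0M fM by (simp add: K_def card_Diff_singleton)
    define p where "p m = (\<Prod>k\<in>K. (of_nat m - of_nat k) / (of_nat m0 - of_nat k) :: complex)" for m
    define u where "u = (\<lambda>y. (\<Prod>k\<in>K. (of_nat (card (y \<inter> x)) - of_nat k) / (of_nat m0 - of_nat k)) * Phi (\<lambda>_. 1) y)"
    have "u \<in> LU (Suc r + card K)" unfolding u_def by (rule LU_prod[OF fK' Phi1_LU])
    hence "u \<in> LU ds" by (rule LU_mono) (use cds cK in simp)
    hence ip0: "ip vv u = 0" using perp by blast
    have uP: "u = Phi p" by (simp add: u_def p_def Phi_def fun_eq_iff)
    have "ip vv u = (\<Sum>m\<in>{..D}. cnj (p m) * aa m)"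
      unfolding uP by (subst ip_Phi_expand) (simp add: vv_ip)
    also have "\<dots> = (\<Sum>m\<in>{..D}. if m = m0 then aa m0 else 0)"
    proof (rule sum.cong[OF refl])
      fix m assume "m \<in> {..D}"
      show "cnj (p m) * aa m = (if m = m0 then aa m0 else 0)"
      proof (cases "m = m0")
        case True
        have "p m0 = 1" unfolding p_def using K_def by (intro prod.neutral) auto
        thus ?thesis using True by simp
      next
        case False
        show ?thesis
        proof (cases "coef m = 0")
          case True thus ?thesis using False aa_eq[of m] by simp
        next
          case c: False
          hence "m \<in> K" using False by (simp add: K_def M'_def)
          hence "p m = 0" unfolding p_def using fK' by (subst prod_zero_iff) auto
          thus ?thesis using False by simp
        qed
      qed
    qed
    also have "\<dots> = aa m0"
    proof -
      have "m0 \<le> D" using coef_range[OF m0] by arith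
      thus ?thesis by (simp add: sum.delta)
    qed
    finally have "aa m0 = 0" using ip0 by simp
    thus False using coef_nz[OF m0] by simp
  qed
qed

end

context mainloc
begin

lemma dx_exists: "\<exists>i. i \<noteq> 0 \<and> i \<le> D \<and> johnson_Estar N D x i chi \<noteq> (\<lambda>_. 0)"
proof -
  have "\<exists>y\<in>Y. y \<noteq> x"
  proof (rule ccontr)
    assume "\<not> (\<exists>y\<in>Y. y \<noteq> x)"
    hence "Y \<subseteq> {x}" by auto
    hence "card Y \<le> 1" using card_mono[of "{x}" Y] by simp
    thus False using cY by simp
  qed
  then obtain y where y: "y \<in> Y" "y \<noteq> x" by blast
  have yX: "y \<in> X" using y YX by auto
  have fy: "finite y" "card y = D" using yX X_fin X_iff by auto
  have le: "card (x \<inter> y) \<le> D" using card_mono[OF x_fin, of "x \<inter> y"] x_card by auto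
  have "card (x \<inter> y) \<noteq> D"
  proof
    assume c: "card (x \<inter> y) = D"
    have "x \<inter> y = x" using card_subset_eq[OF x_fin, of "x \<inter> y"] c x_card by auto
    moreover have "x \<inter> y = y" using card_subset_eq[OF fy(1), of "x \<inter> y"] c fy by auto
    ultimately show False using y by simp
  qed
  hence lt: "card (x \<inter> y) < D" using le by simp
  define i where "i = D - card (x \<inter> y)"
  have "card (x \<inter> y) = D - i" using le by (simp add: i_def)
  hence "johnson_Estar N D x i chi \<noteq> (\<lambda>_. 0)" using Estar_iff y by blast
  moreover have "i \<noteq> 0" "i \<le> D" using lt by (auto simp: i_def)
  ultimately show ?thesis by blast
qed

lemma main_A:
  assumes A: "int (card {j. r \<le> j \<and> j \<le> D - r \<and> johnson_E N D j chi \<noteq> (\<lambda>_. 0)})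
              \<le> int (delta_x N D x chi) - int r"
  shows "vv = (\<lambda>y. 0)"
proof (rule ccontr)
  assume nz: "vv \<noteq> (\<lambda>y. 0)"
  define dx where "dx = delta_x N D x chi"
  have dxP: "dx \<noteq> 0 \<and> dx \<le> D \<and> johnson_Estar N D x dx chi \<noteq> (\<lambda>_. 0)"
    unfolding dx_def delta_x_def by (rule LeastI_ex) (rule dx_exists)
  have below: "\<And>i. i < dx \<Longrightarrow> i \<noteq> 0 \<Longrightarrow> johnson_Estar N D x i chi = (\<lambda>_. 0)"
  proof -
    fix i assume "i < dx" "i \<noteq> 0"
    from \<open>i < dx\<close> have "\<not> (i \<noteq> 0 \<and> i \<le> D \<and> johnson_Estar N D x i chi \<noteq> (\<lambda>_. 0))"
      unfolding dx_def delta_x_def by (rule not_less_Least)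
    thus "johnson_Estar N D x i chi = (\<lambda>_. 0)" using \<open>i \<noteq> 0\<close> \<open>i < dx\<close> dxP by auto
  qed
  define Jset where "Jset = {j. r \<le> j \<and> j \<le> D - r \<and> johnson_E N D j chi \<noteq> (\<lambda>_. 0)}"
  define J' where "J' = {j. j \<le> D \<and> johnson_E N D j vv \<noteq> (\<lambda>_. 0)}"
  have JJ: "J' \<subseteq> Jset"
  proof
    fix j assume j: "j \<in> J'"
    hence jD: "j \<le> D" and ne: "johnson_E N D j vv \<noteq> (\<lambda>_. 0)" by (auto simp: J'_def)
    have "\<not> j < r" using Ev_small[of j] jD ne by auto
    moreover have "\<not> D - r < j" using Ev_big[of j] ne by auto
    moreover have "johnson_E N D j chi \<noteq> (\<lambda>_. 0)" using transfer_E ne by auto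
    ultimately show "j \<in> Jset" by (auto simp: Jset_def)
  qed
  have fJ: "finite Jset" by (rule finite_subset[of _ "{..D}"]) (auto simp: Jset_def)
  have fJ': "finite J'" using finite_subset[OF JJ fJ] .
  have cJ: "card J' + r \<le> dx" using card_mono[OF fJ JJ] A by (simp add: Jset_def dx_def)
  define M' where "M' = {m. coef m \<noteq> 0}"
  have fM: "finite M'" using finite_M by (simp add: M'_def)
  have neM: "M' \<noteq> {}" using ex_coef[OF nz] by (auto simp: M'_def)
  define m0 where "m0 = Max M'"
  have m0M: "m0 \<in> M'" using Max_in[OF fM neM] by (simp add: m0_def)
  have c0: "\<forall>m>m0. coef m = 0"
  proof (intro allI impI)
    fix m assume "m0 < m"
    show "coef m = 0"
    proof (rule ccontr)
      assume "coef m \<noteq> 0"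
      hence "m \<le> m0" using Max_ge[OF fM] by (simp add: M'_def m0_def)
      thus False using \<open>m0 < m\<close> by simp
    qed
  qed
  have c1: "coef m0 \<noteq> 0" using m0M by (simp add: M'_def)
  have rng: "r \<le> m0 \<and> m0 \<le> D - r" by (rule coef_range[OF c1])
  have m0dx: "m0 \<le> D - dx"
  proof (rule ccontr)
    assume "\<not> m0 \<le> D - dx"
    define i where "i = D - m0"
    have "i < dx" "i \<noteq> 0" using \<open>\<not> m0 \<le> D - dx\<close> rng r1 dxP by (auto simp: i_def)
    hence "johnson_Estar N D x i chi = (\<lambda>_. 0)" by (rule below)
    moreover obtain y where y: "y \<in> Y" "card (x \<inter> y) = m0" using aa_nz coef_nz[OF c1] by blast
    moreover have "m0 = D - i" using rng by (simp add: i_def) arith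
    ultimately show False using Estar_iff by auto
  qed
  define L where "L = sorted_list_of_set J'"
  have sL: "set L = J'" and lL: "length L = card J'" using fJ' by (auto simp: L_def)
  have len: "m0 + length L \<le> D - r" using m0dx cJ dxP lL by arith
  have low: "(\<forall>m > m0 + length L. prc L coef m = 0) \<and> prc L coef (m0 + length L) \<noteq> 0"
    by (rule LOW[OF c0 c1 _ len]) (use rng in simp)
  have Qv: "pr L vv = Phi (prc L coef)" by (simp add: vv_def pr_Phi)
  have "nn m0 \<noteq> 0" using coef_nz[OF c1] by simp
  hence "Phi (dl m0) \<noteq> (\<lambda>y. 0)" by (auto simp: nn_def ip_zero1)
  then obtain y0 where "Phi (dl m0) y0 \<noteq> 0" by auto
  hence "Gh (y0 \<inter> x) \<noteq> 0" by (auto simp: Phi_def split: if_splits)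
  then obtain T0 where T0: "h T0 \<noteq> 0" unfolding Gh_def by (meson sum.neutral)
  obtain S where S: "S \<subseteq> x" "card S = m0 + length L" "Gh S \<noteq> 0"
    using Gh_nz[OF T0, of "m0 + length L"] rng len by auto
  have "D - card S \<le> card ({1..N} - x)" using x_sub x_card DN by (simp add: card_Diff_subset x_fin)
  then obtain Z where Z: "Z \<subseteq> {1..N} - x" "card Z = D - card S" by (rule obtain_subset_with_card_n)
  have ZZ: "Z \<in> ZZ (card S)" using Z by (simp add: ZZ_def)
  have yX: "S \<union> Z \<in> X" and yx: "(S \<union> Z) \<inter> x = S" using union_props[OF S(1) ZZ] by auto
  have "pr L vv (S \<union> Z) \<noteq> 0" unfolding Qv using yX yx S low by (simp add: Phi_def)
  moreover have "pr L vv = (\<lambda>y. 0)"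
  proof (rule all_E_zero)
    show "onX (pr L vv)" by simp
    fix l assume l: "l \<le> D"
    have "johnson_E N D l (pr L vv) = pr L (johnson_E N D l vv)" by (rule E_pr_comm)
    also have "\<dots> = (\<lambda>y. 0)"
    proof (cases "l \<in> J'")
      case True
      hence "l \<in> set L" using sL by simp
      hence "pr L (johnson_E N D l vv) = pr (remove1 l L) (op l (johnson_E N D l vv))" by (rule pr_remove)
      also have "\<dots> = (\<lambda>y. 0)" using E_eig[OF l] by (simp add: pr_zero)
      finally show ?thesis .
    next
      case False
      hence "johnson_E N D l vv = (\<lambda>_. 0)" using l by (auto simp: J'_def)
      thus ?thesis by (simp add: pr_zero)
    qed
    finally show "johnson_E N D l (pr L vv) = (\<lambda>y. 0)" .
  qed
  ultimately show False by simp
qed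

lemma main_lemma:
  assumes "int (card {j. r \<le> j \<and> j \<le> D - r \<and> johnson_E N D j chi \<noteq> (\<lambda>_. 0)})
              \<le> int (delta_x N D x chi) - int r
         \<or> int (card {i. r \<le> i \<and> i \<le> D - r \<and> johnson_Estar N D x i chi \<noteq> (\<lambda>_. 0)})
              \<le> int (delta_star N D chi) - int r"
  shows "(\<Sum>y\<in>{y \<in> Y. card (x \<inter> y) = m}. Gh (x \<inter> y)) = 0"
proof -
  have "vv = (\<lambda>y. 0)" using assms main_A main_B by blast
  hence "aa m = 0" by (rule vv_zero_aa)
  have "aa m = (\<Sum>y\<in>X. if y \<in> Y \<and> card (x \<inter> y) = m then cnj (Gh (x \<inter> y)) else 0)"
    unfolding aa_def ip_def by (rule sum.cong) (auto simp: char_vec_def Phi_def dl_def Int_commute)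
  also have "\<dots> = (\<Sum>y\<in>{y \<in> Y. card (x \<inter> y) = m}. cnj (Gh (x \<inter> y)))"
  proof -
    have "{y \<in> X. y \<in> Y \<and> card (x \<inter> y) = m} = {y \<in> Y. card (x \<inter> y) = m}" using YX by auto
    thus ?thesis using sum.inter_filter[OF finX, of "\<lambda>y. cnj (Gh (x \<inter> y))" "\<lambda>y. y \<in> Y \<and> card (x \<inter> y) = m"]
      by simp
  qed
  finally have s0: "(\<Sum>y\<in>{y \<in> Y. card (x \<inter> y) = m}. cnj (Gh (x \<inter> y))) = 0" using \<open>aa m = 0\<close> by simp
  have "cnj (\<Sum>y\<in>{y \<in> Y. card (x \<inter> y) = m}. Gh (x \<inter> y)) = 0" using s0 by (simp only: cnj_sum)
  thus ?thesis by (simp only: complex_cnj_zero_iff)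
qed

end

context jsetup
begin

lemma design_level:
  fixes m :: nat and Y :: "nat set set"
  assumes YX: "Y \<subseteq> X" and tD: "t \<le> D"
    and H: "\<And>rr (f :: nat set \<Rightarrow> complex). 1 \<le> rr \<Longrightarrow> rr \<le> t \<Longrightarrow> (\<And>T. f T \<noteq> 0 \<Longrightarrow> T \<subseteq> x \<and> card T = rr)
       \<Longrightarrow> (\<And>R. R \<subseteq> x \<Longrightarrow> card R + 1 = rr \<Longrightarrow> (\<Sum>b\<in>x - R. f (insert b R)) = 0)
       \<Longrightarrow> (\<Sum>y\<in>{y \<in> Y. card (x \<inter> y) = m}. \<Sum>T\<in>Pow (x \<inter> y). f T) = 0"
  shows "s \<le> t \<Longrightarrow> \<exists>lam. \<forall>T. T \<subseteq> x \<and> card T = s \<longrightarrow> card {y \<in> Y. card (x \<inter> y) = m \<and> T \<subseteq> y} = lam"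
proof (induction s)
  case 0
  show ?case
  proof (intro exI allI impI)
    fix T assume "T \<subseteq> x \<and> card T = 0"
    hence "T = {}" using x_fin finite_subset by (metis card_0_eq)
    thus "card {y \<in> Y. card (x \<inter> y) = m \<and> T \<subseteq> y} = card {y \<in> Y. card (x \<inter> y) = m \<and> {} \<subseteq> y}" by simp
  qed
next
  case (Suc s)
  obtain lam0 where lam0: "\<And>R. R \<subseteq> x \<Longrightarrow> card R = s \<Longrightarrow> card {y \<in> Y. card (x \<inter> y) = m \<and> R \<subseteq> y} = lam0"
    using Suc by auto
  define Yk where "Yk = {y \<in> Y. card (x \<inter> y) = m}"
  have fY: "finite Y" using YX finX finite_subset by blast
  have fYk: "finite Yk" using fY by (simp add: Yk_def)
  define Nc where "Nc T = card {y \<in> Yk. T \<subseteq> y}" for T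
  have Nc_eq: "\<And>T. card {y \<in> Y. card (x \<inter> y) = m \<and> T \<subseteq> y} = Nc T"
    by (simp add: Nc_def Yk_def conj_assoc)
  define rr where "rr = Suc s"
  define LLs where "LLs = {T. T \<subseteq> x \<and> card T = rr}"
  have fLL: "finite LLs" by (rule finite_subset[of _ "Pow x"]) (auto simp: LLs_def x_fin)
  define mu where "mu = real ((m - s) * lam0) / real (D - s)"
  define f where "f T = (if T \<subseteq> x \<and> card T = rr then complex_of_real (real (Nc T) - mu) else 0)" for T
  have sD: "s < D" using Suc tD by simp
  have supp: "\<And>T. f T \<noteq> 0 \<Longrightarrow> T \<subseteq> x \<and> card T = rr" by (auto simp: f_def split: if_splits)
  have harmf: "\<And>R. R \<subseteq> x \<Longrightarrow> card R + 1 = rr \<Longrightarrow> (\<Sum>b\<in>x - R. f (insert b R)) = 0"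
  proof -
    fix R assume R: "R \<subseteq> x" "card R + 1 = rr"
    have fR: "finite R" using R x_fin finite_subset by blast
    have cR: "card R = s" using R by (simp add: rr_def)
    have "(\<Sum>b\<in>x - R. real (Nc (insert b R))) = real (\<Sum>b\<in>x - R. Nc (insert b R))" by simp
    also have "(\<Sum>b\<in>x - R. Nc (insert b R)) = (\<Sum>b\<in>x - R. \<Sum>y\<in>Yk. if insert b R \<subseteq> y then 1 else 0)"
      using fYk by (simp add: Nc_def sum_ind)
    also have "\<dots> = (\<Sum>y\<in>Yk. \<Sum>b\<in>x - R. if insert b R \<subseteq> y then 1 else 0)" by (rule sum.swap)
    also have "\<dots> = (\<Sum>y\<in>Yk. if R \<subseteq> y then m - s else 0)"
    proof (rule sum.cong[OF refl])
      fix y assume y: "y \<in> Yk"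
      have fy: "finite y" using y YX X_fin by (auto simp: Yk_def)
      show "(\<Sum>b\<in>x - R. if insert b R \<subseteq> y then 1 else 0) = (if R \<subseteq> y then m - s else 0)"
      proof (cases "R \<subseteq> y")
        case True
        have "(\<Sum>b\<in>x - R. if insert b R \<subseteq> y then 1 else (0::nat)) = card {b \<in> x - R. b \<in> y}"
          using x_fin True by (simp add: sum_ind)
        also have "{b \<in> x - R. b \<in> y} = (x \<inter> y) - R" by auto
        also have "card ((x \<inter> y) - R) = m - s"
          using True R y fR cR by (simp add: card_Diff_subset Yk_def)
        finally show ?thesis using True by simp
      qed auto
    qed
    also have "\<dots> = (m - s) * Nc R" using fYk by (simp add: Nc_def sum_ind)
    also have "Nc R = lam0" using lam0[OF R(1) cR] Nc_eq by simp
    finally have S1: "(\<Sum>b\<in>x - R. real (Nc (insert b R))) = real ((m - s) * lam0)" .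
    have cxR: "card (x - R) = D - s" using R fR x_card cR by (simp add: card_Diff_subset)
    have "(\<Sum>b\<in>x - R. f (insert b R)) = (\<Sum>b\<in>x - R. complex_of_real (real (Nc (insert b R)) - mu))"
      using R fR cR by (intro sum.cong refl) (auto simp: f_def rr_def)
    also have "\<dots> = complex_of_real ((\<Sum>b\<in>x - R. real (Nc (insert b R))) - real (D - s) * mu)"
      by (simp add: of_real_sum sum_subtractf cxR)
    also have "\<dots> = 0" using S1 sD by (simp add: mu_def)
    finally show "(\<Sum>b\<in>x - R. f (insert b R)) = 0" .
  qed
  have rr1: "1 \<le> rr" "rr \<le> t" using Suc by (auto simp: rr_def)
  have H0: "(\<Sum>y\<in>Yk. \<Sum>T\<in>Pow (x \<inter> y). f T) = 0"
    unfolding Yk_def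
  proof (rule H)
    show "1 \<le> rr" "rr \<le> t" using rr1 by auto
    show "\<And>T. f T \<noteq> 0 \<Longrightarrow> T \<subseteq> x \<and> card T = rr" by (rule supp)
    show "\<And>R. R \<subseteq> x \<Longrightarrow> card R + 1 = rr \<Longrightarrow> (\<Sum>b\<in>x - R. f (insert b R)) = 0" by (rule harmf)
  qed
  have inner: "\<And>y. (\<Sum>T\<in>Pow (x \<inter> y). f T) = (\<Sum>T\<in>LLs. if T \<subseteq> y then f T else 0)"
  proof -
    fix y
    have "(\<Sum>T\<in>Pow (x \<inter> y). f T) = (\<Sum>T\<in>{T \<in> Pow x. T \<subseteq> y}. f T)" by (rule sum.cong) auto
    also have "\<dots> = (\<Sum>T\<in>Pow x. if T \<subseteq> y then f T else 0)" by (rule sum.inter_filter) (simp add: x_fin)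
    also have "\<dots> = (\<Sum>T\<in>LLs. if T \<subseteq> y then f T else 0)"
      by (rule sum.mono_neutral_right) (auto simp: x_fin LLs_def f_def)
    finally show "(\<Sum>T\<in>Pow (x \<inter> y). f T) = (\<Sum>T\<in>LLs. if T \<subseteq> y then f T else 0)" .
  qed
  have "(\<Sum>y\<in>Yk. \<Sum>T\<in>Pow (x \<inter> y). f T) = (\<Sum>T\<in>LLs. f T * of_nat (Nc T))"
  proof -
    have "(\<Sum>y\<in>Yk. \<Sum>T\<in>Pow (x \<inter> y). f T) = (\<Sum>y\<in>Yk. \<Sum>T\<in>LLs. if T \<subseteq> y then f T else 0)"
      by (rule sum.cong[OF refl], rule inner)
    also have "\<dots> = (\<Sum>T\<in>LLs. \<Sum>y\<in>Yk. if T \<subseteq> y then f T else 0)" by (rule sum.swap)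
    also have "\<dots> = (\<Sum>T\<in>LLs. f T * of_nat (Nc T))"
      using fYk by (simp add: sum_ind Nc_def mult.commute)
    finally show ?thesis .
  qed
  hence E1: "(\<Sum>T\<in>LLs. f T * of_nat (Nc T)) = 0" using H0 by simp
  interpret hh: harm N D x rr f
    by unfold_locales (use D1 DN xX rr1 supp harmf in auto)
  have "(\<Sum>b\<in>x - x. hh.Gh (insert b x)) = (of_nat D - of_nat (card x) - of_nat rr) * hh.Gh x"
    by (rule hh.G2) simp
  hence "hh.Gh x = 0" using x_card rr1 by simp
  hence E2: "(\<Sum>T\<in>LLs. f T) = 0"
  proof -
    have "(\<Sum>T\<in>LLs. if T \<subseteq> x then f T else 0) = (\<Sum>T\<in>LLs. f T)"
      by (rule sum.cong) (auto simp: LLs_def)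
    thus ?thesis using \<open>hh.Gh x = 0\<close> inner[of x] unfolding hh.Gh_def by simp
  qed
  have "(\<Sum>T\<in>LLs. f T * (of_nat (Nc T) - complex_of_real mu)) = (\<Sum>T\<in>LLs. f T * of_nat (Nc T)) - (\<Sum>T\<in>LLs. f T) * complex_of_real mu"
    by (simp add: right_diff_distrib sum_subtractf sum_distrib_right)
  hence "(\<Sum>T\<in>LLs. f T * (of_nat (Nc T) - complex_of_real mu)) = 0" using E1 E2 by simp
  moreover have "\<And>T. T \<in> LLs \<Longrightarrow> f T * (of_nat (Nc T) - complex_of_real mu) = complex_of_real ((real (Nc T) - mu)\<^sup>2)"
    by (simp add: f_def LLs_def power2_eq_square)
  ultimately have "(\<Sum>T\<in>LLs. complex_of_real ((real (Nc T) - mu)\<^sup>2)) = 0" by simp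
  hence "complex_of_real (\<Sum>T\<in>LLs. (real (Nc T) - mu)\<^sup>2) = 0" by (simp only: of_real_sum)
  hence "(\<Sum>T\<in>LLs. (real (Nc T) - mu)\<^sup>2) = 0" by (simp only: of_real_eq_0_iff)
  hence allmu: "\<forall>T\<in>LLs. real (Nc T) = mu" using fLL by (simp add: sum_nonneg_eq_0_iff)
  show ?case
  proof (cases "LLs = {}")
    case True
    thus ?thesis by (auto simp: LLs_def rr_def)
  next
    case False
    then obtain T0 where T0: "T0 \<in> LLs" by blast
    show ?thesis
    proof (intro exI allI impI)
      fix T assume "T \<subseteq> x \<and> card T = Suc s"
      hence "T \<in> LLs" by (simp add: LLs_def rr_def)
      hence "real (Nc T) = real (Nc T0)" using allmu T0 by simp
      thus "card {y \<in> Y. card (x \<inter> y) = m \<and> T \<subseteq> y} = Nc T0" using Nc_eq by simp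
    qed
  qed
qed

end

theorem mainTheorem14:
  fixes N D t :: nat and x :: "nat set" and Y :: "nat set set"
  assumes "1 \<le> D" and "D \<le> N div 2"
    and "x \<in> johnson_X N D"
    and "Y \<subseteq> johnson_X N D" and "1 < card Y" and "card Y < card (johnson_X N D)"
    and "1 \<le> t" and "t \<le> D"
    and "\<forall>r. 1 \<le> r \<and> r \<le> t \<longrightarrow>
           int (card {j. r \<le> j \<and> j \<le> D - r \<and> johnson_E N D j (char_vec Y) \<noteq> (\<lambda>_. 0)})
              \<le> int (delta_x N D x (char_vec Y)) - int r
         \<or> int (card {i. r \<le> i \<and> i \<le> D - r \<and> johnson_Estar N D x i (char_vec Y) \<noteq> (\<lambda>_. 0)})
              \<le> int (delta_star N D (char_vec Y)) - int r"
  shows "\<forall>k\<le>D. is_t_design t x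
           (image_mset (\<lambda>y. x \<inter> y) (mset_set {y\<in>Y. card (x \<inter> y) = D - k}))"
proof -
  have DN: "2 * D \<le> N" using assms(2) by simp
  interpret js: jsetup N D x using assms(1,3) DN by unfold_locales auto
  show ?thesis
  proof (intro allI impI)
    fix k assume "k \<le> D"
    define m where "m = D - k"
    have H: "\<And>rr (f :: nat set \<Rightarrow> complex). 1 \<le> rr \<Longrightarrow> rr \<le> t \<Longrightarrow> (\<And>T. f T \<noteq> 0 \<Longrightarrow> T \<subseteq> x \<and> card T = rr)
       \<Longrightarrow> (\<And>R. R \<subseteq> x \<Longrightarrow> card R + 1 = rr \<Longrightarrow> (\<Sum>b\<in>x - R. f (insert b R)) = 0)
       \<Longrightarrow> (\<Sum>y\<in>{y \<in> Y. card (x \<inter> y) = m}. \<Sum>T\<in>Pow (x \<inter> y). f T) = 0"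
    proof -
      fix rr and f :: "nat set \<Rightarrow> complex"
      assume rr: "1 \<le> rr" "rr \<le> t" and supp: "\<And>T. f T \<noteq> 0 \<Longrightarrow> T \<subseteq> x \<and> card T = rr"
        and harmf: "\<And>R. R \<subseteq> x \<Longrightarrow> card R + 1 = rr \<Longrightarrow> (\<Sum>b\<in>x - R. f (insert b R)) = 0"
      interpret ml: mainloc N D x rr f Y
        by unfold_locales (use assms(1,3,4,5) DN rr supp harmf in auto)
      have "(\<Sum>y\<in>{y \<in> Y. card (x \<inter> y) = m}. ml.Gh (x \<inter> y)) = 0"
        by (rule ml.main_lemma) (use assms(9) rr in blast)
      thus "(\<Sum>y\<in>{y \<in> Y. card (x \<inter> y) = m}. \<Sum>T\<in>Pow (x \<inter> y). f T) = 0"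
        by (simp add: ml.Gh_def)
    qed
    obtain lam where lam: "\<forall>T. T \<subseteq> x \<and> card T = t \<longrightarrow> card {y \<in> Y. card (x \<inter> y) = m \<and> T \<subseteq> y} = lam"
    proof -
      have "t \<le> t \<Longrightarrow> \<exists>lam. \<forall>T. T \<subseteq> x \<and> card T = t \<longrightarrow> card {y \<in> Y. card (x \<inter> y) = m \<and> T \<subseteq> y} = lam"
        by (rule js.design_level[OF assms(4) assms(8) H])
      thus thesis using that by blast
    qed
    have fY: "finite {y \<in> Y. card (x \<inter> y) = D - k}"
      using assms(4) js.finX finite_subset by (metis (no_types, lifting) mem_Collect_eq subsetI rev_finite_subset subsetD)
    show "is_t_design t x (image_mset (\<lambda>y. x \<inter> y) (mset_set {y \<in> Y. card (x \<inter> y) = D - k}))"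
      unfolding is_t_design_def
    proof (intro exI allI impI)
      fix T assume T: "T \<subseteq> x \<and> card T = t"
      have "size (filter_mset (\<lambda>b. T \<subseteq> b) (image_mset (\<lambda>y. x \<inter> y) (mset_set {y \<in> Y. card (x \<inter> y) = D - k})))
          = card {y \<in> {y \<in> Y. card (x \<inter> y) = D - k}. T \<subseteq> x \<inter> y}"
        using fY by (simp add: filter_mset_image_mset filter_mset_mset_set)
      also have "{y \<in> {y \<in> Y. card (x \<inter> y) = D - k}. T \<subseteq> x \<inter> y} = {y \<in> Y. card (x \<inter> y) = m \<and> T \<subseteq> y}"
        using T by (auto simp: m_def)
      finally show "size (filter_mset (\<lambda>b. T \<subseteq> b) (image_mset (\<lambda>y. x \<inter> y) (mset_set {y \<in> Y. card (x \<inter> y) = D - k}))) = lam"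
        using lam T by simp
    qed
  qed
qed

end
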